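(* Let $1\le n<L$ and $p_k,q_k>0$ for all $k$. In the stationary distribution of the chain on $\mathcal{A}_{L,n}$, for all $1\le i\le n$ and $1\le j\le L$, $$\langle\tau_{i,j}\rangle=\frac{1}{L},$$ and for all $1\le i\le n$ and $1\le j<j'\le L$, $\langle\eta_{i,j}\rangle=\langle\eta_{i,j'}\rangle$.
   Context: Particle labels/rows are taken modulo $n$, positions/columns modulo $L$. $\Omega_{L,n}$ is the set of words $w_1\cdots w_L$ on the ring $\mathbb{Z}/L\mathbb{Z}$ over the alphabet $\{\bullet_1,\dots,\bullet_n,\Box_1,\dots,\Box_n\}$ in which each $\bullet_k$ occurs exactly once, the $\bullet_1,\dots,\bullet_n$ appear in this cyclic order, and the remaining $L-n$ letters are arbitrary $\Box_i$'s. Transitions (displayed segments are consecutive positions, rest unchanged, $C$ a possibly empty word in the $\Box$-letters): (T1) $\bullet_k\Box_i \to \Box_i\bullet_k$ at rate $p_k$, if $i\neq k$; (T2) $\bullet_{k-1}\,C\,\bullet_k\Box_k \to \bullet_{k-1}\Box_{k-1}\,C\,\bullet_k$ at rate $p_k$; (T3) $\Box_i\bullet_k \to \bullet_k\Box_i$ at rate $q_k$, if $i\neq k$; (T4) $\Box_k\bullet_k\,C\,\bullet_{k+1} \to \bullet_k\,C\,\Box_{k+1}\bullet_{k+1}$ at rate $q_k$. $\mathcal{A}_{L,n}$ is the set of arrays with $n$ rows and $L$ columns, entries in $\{\cdot,\bullet,\Box\}$, identified with $\Omega_{L,n}$ via: column $j$ has a $\bullet$ (resp. $\Box$) in row $k$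 and $\cdot$ elsewhere iff $w_j=\bullet_k$ (resp. $\Box_k$); it carries the transported dynamics, which is irreducible under the stated hypotheses. $\tau_{i,j}$ (resp. $\eta_{i,j}$) is the indicator that site $(i,j)$ (row $i$, column $j$) is occupied by a $\bullet$ (resp. $\Box$), and $\langle\cdot\rangle$ denotes expectation under the unique stationary distribution. *)

theory Defs
  imports Complex_Main
begin

text \<open>Letters of the alphabet: P k is the particle \<bullet>_k, H i is the box (hole) \<Box>_i.
  Labels are 0-based: k, i range over {0..<n} (paper: 1..n); positions are 0-based
  in {0..<L} (paper: 1..L).  A configuration is a list of length L, read cyclically.\<close>
datatype letter = P nat | H nat

definition is_P :: "letter \<Rightarrow> bool" where
  "is_P x = (case x of P _ \<Rightarrow> True | H _ \<Rightarrow> False)"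

definition label_ok :: "nat \<Rightarrow> letter \<Rightarrow> bool" where
  "label_ok n x = (case x of P k \<Rightarrow> k < n | H i \<Rightarrow> i < n)"

definition omega :: "nat \<Rightarrow> nat \<Rightarrow> letter list set" where
  "omega L n = {w. length w = L \<and> (\<forall>x\<in>set w. label_ok n x)
     \<and> (\<forall>k<n. count_list w (P k) = 1)
     \<and> (\<exists>r. [k. P k \<leftarrow> w] = rotate r [0..<n])}"

text \<open>Cyclic distance from position j back to the previous particle, and forward to the
  next particle (equal to L if j holds the only particle).\<close>
definition dback :: "nat \<Rightarrow> letter list \<Rightarrow> nat \<Rightarrow> nat" where
  "dback L w j = (LEAST d. 0 < d \<and> is_P (w ! ((j + L - d) mod L)))"

definition dfwd :: "nat \<Rightarrow> letter list \<Rightarrow> nat \<Rightarrow> nat" where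
  "dfwd L w j = (LEAST d. 0 < d \<and> is_P (w ! ((j + d) mod L)))"

definition swap_at :: "letter list \<Rightarrow> nat \<Rightarrow> nat \<Rightarrow> letter list" where
  "swap_at w a b = w[a := w ! b, b := w ! a]"

text \<open>(T2) for the particle P k at position j with H k at j+1:
  P_{k-1} C P_k H_k  becomes  P_{k-1} H_{k-1} C P_k.\<close>
definition t2_res :: "nat \<Rightarrow> nat \<Rightarrow> letter list \<Rightarrow> nat \<Rightarrow> nat \<Rightarrow> letter list" where
  "t2_res L n w j k = (let d = dback L w j in
     map (\<lambda>m. if m = (j + 1) mod L then P k
              else if m = (j + 1 + L - d) mod L then H ((k + n - 1) mod n)
              else if (\<exists>t\<in>{1..<d}. m = (j + 1 + L - d + t) mod L) then w ! ((m + L - 1) mod L)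
              else w ! m) [0..<L])"

text \<open>(T4) for the particle P k at position j with H k at j-1:
  H_k P_k C P_{k+1}  becomes  P_k C H_{k+1} P_{k+1}.\<close>
definition t4_res :: "nat \<Rightarrow> nat \<Rightarrow> letter list \<Rightarrow> nat \<Rightarrow> nat \<Rightarrow> letter list" where
  "t4_res L n w j k = (let d = dfwd L w j in
     map (\<lambda>m. if m = (j + L - 1) mod L then P k
              else if m = (j + d + L - 1) mod L then H ((k + 1) mod n)
              else if (\<exists>t\<in>{1..<d}. m = (j + L - 1 + t) mod L) then w ! ((m + 1) mod L)
              else w ! m) [0..<L])"

definition rate_at :: "nat \<Rightarrow> nat \<Rightarrow> (nat \<Rightarrow> real) \<Rightarrow> (nat \<Rightarrow> real)
    \<Rightarrow> letter list \<Rightarrow> letter list \<Rightarrow> nat \<Rightarrow> real" where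
  "rate_at L n p q w w' j =
    (case w ! j of H _ \<Rightarrow> 0
     | P k \<Rightarrow>
        (case w ! ((j + 1) mod L) of P _ \<Rightarrow> 0
         | H i \<Rightarrow> if i \<noteq> k
                  then (if swap_at w j ((j + 1) mod L) = w' then p k else 0)   \<comment> \<open>T1\<close>
                  else (if t2_res L n w j k = w' then p k else 0))             \<comment> \<open>T2\<close>
      + (case w ! ((j + L - 1) mod L) of P _ \<Rightarrow> 0
         | H i \<Rightarrow> if i \<noteq> k
                  then (if swap_at w j ((j + L - 1) mod L) = w' then q k else 0) \<comment> \<open>T3\<close>
                  else (if t4_res L n w j k = w' then q k else 0)))"          \<comment> \<open>T4\<close>

definition rate :: "nat \<Rightarrow> nat \<Rightarrow> (nat \<Rightarrow> real) \<Rightarrow> (nat \<Rightarrow> real)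
    \<Rightarrow> letter list \<Rightarrow> letter list \<Rightarrow> real" where
  "rate L n p q w w' = (\<Sum>j<L. rate_at L n p q w w' j)"

definition stationary_dist :: "nat \<Rightarrow> nat \<Rightarrow> (nat \<Rightarrow> real) \<Rightarrow> (nat \<Rightarrow> real)
    \<Rightarrow> (letter list \<Rightarrow> real) \<Rightarrow> bool" where
  "stationary_dist L n p q \<pi> \<longleftrightarrow>
     (\<forall>w\<in>omega L n. 0 \<le> \<pi> w) \<and> (\<Sum>w\<in>omega L n. \<pi> w) = 1 \<and>
     (\<forall>w\<in>omega L n.
        (\<Sum>w'\<in>omega L n - {w}. \<pi> w' * rate L n p q w' w)
          = \<pi> w * (\<Sum>w'\<in>omega L n - {w}. rate L n p q w w'))"

definition tau :: "nat \<Rightarrow> nat \<Rightarrow> letter list \<Rightarrow> real" where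
  "tau i j w = (if w ! j = P i then 1 else 0)"

definition eta :: "nat \<Rightarrow> nat \<Rightarrow> letter list \<Rightarrow> real" where
  "eta i j w = (if w ! j = H i then 1 else 0)"

definition expect :: "nat \<Rightarrow> nat \<Rightarrow> (letter list \<Rightarrow> real) \<Rightarrow> (letter list \<Rightarrow> real) \<Rightarrow> real" where
  "expect L n \<pi> f = (\<Sum>w\<in>omega L n. \<pi> w * f w)"

end

theory Submission
  imports Defs
begin

lemma suc_mod_inj:
  assumes "m < L" shows "(Suc m mod L = Suc x mod L) \<longleftrightarrow> (m = x mod L)"
proof -
  have y: "x mod L < L" using assms by simp
  have e: "Suc x mod L = Suc (x mod L) mod L" by (simp add: mod_Suc_eq)
  have "Suc m mod L = Suc (x mod L) mod L \<longleftrightarrow> m = x mod L"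
    using assms y by (auto simp: mod_Suc split: if_splits)
  then show ?thesis using e by simp
qed
lemma t1: fixes j L d :: nat assumes "d \<le> L" shows "Suc ((j + L - d) mod L) mod L = (Suc j mod L + L - d) mod L"
  proof -
    have a: "j + L - d = j + (L - d)" using assms by simp
    have b: "Suc j mod L + L - d = Suc j mod L + (L - d)" using assms by simp
    have c: "Suc ((j + (L-d)) mod L) mod L = Suc (j + (L-d)) mod L" by (rule mod_Suc_eq)
    have e: "(Suc j mod L + (L-d)) mod L = (Suc j + (L-d)) mod L" by (rule mod_add_left_eq)
    show ?thesis unfolding a b c e by simp
  qed
lemma nth_rot1:
  assumes "length w = L" "m < L" shows "rotate1 w ! m = w ! (Suc m mod L)"
  using assms nth_rotate1[of m w] by simp

lemma least_agree:
  fixes P Q :: "nat \<Rightarrow> bool"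
  assumes "\<And>d. d \<le> L \<Longrightarrow> P d = Q d" "0 < L" "P L"
  shows "(LEAST d. 0 < d \<and> P d) = (LEAST d. 0 < d \<and> Q d)"
proof -
  have qL: "0 < L \<and> Q L" using assms by auto
  define D where "D = (LEAST d. 0 < d \<and> Q d)"
  have D1: "0 < D \<and> Q D" unfolding D_def by (rule LeastI[of _ L]) (fact qL)
  have D2: "D \<le> L" unfolding D_def by (rule Least_le) (fact qL)
  have "(LEAST d. 0 < d \<and> P d) = D"
  proof (rule Least_equality)
    show "0 < D \<and> P D" using D1 D2 assms(1) by auto
    fix e assume e: "0 < e \<and> P e"
    show "D \<le> e"
    proof (cases "e \<le> L")
      case True then have "0 < e \<and> Q e" using e assms(1) by auto
      then show ?thesis unfolding D_def by (rule Least_le)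
    next
      case False then show ?thesis using D2 by simp
    qed
  qed
  then show ?thesis unfolding D_def .
qed

lemma dback_rot:
  assumes len: "length w = L" and j: "j < L" and isp: "is_P (w ! (Suc j mod L))"
  shows "dback L (rotate1 w) j = dback L w (Suc j mod L)"
  unfolding dback_def
proof (rule least_agree)
  show "0 < L" using j by simp
  fix d assume d: "d \<le> L"
  have "(j + L - d) mod L < L" using j by simp
  then have "rotate1 w ! ((j + L - d) mod L) = w ! (Suc ((j + L - d) mod L) mod L)"
    using nth_rot1[OF len] by blast
  also have "Suc ((j + L - d) mod L) mod L = (Suc j mod L + L - d) mod L" using t1[OF d] .
  finally show "is_P (rotate1 w ! ((j + L - d) mod L)) = is_P (w ! ((Suc j mod L + L - d) mod L))"
    by simp
next
  have "(j + L - L) mod L = j" using j by simp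
  then show "is_P (rotate1 w ! ((j + L - L) mod L))" using isp nth_rot1[OF len j] by simp
qed

lemma dfwd_rot:
  assumes len: "length w = L" and j: "j < L"
  shows "dfwd L (rotate1 w) j = dfwd L w (Suc j mod L)"
  unfolding dfwd_def
proof -
  have eq: "\<And>d. rotate1 w ! ((j + d) mod L) = w ! ((Suc j mod L + d) mod L)"
  proof -
    fix d
    have "(j + d) mod L < L" using j by simp
    then have "rotate1 w ! ((j + d) mod L) = w ! (Suc ((j + d) mod L) mod L)"
      using nth_rot1[OF len] by blast
    also have "Suc ((j + d) mod L) mod L = (Suc j mod L + d) mod L"
      by (metis mod_Suc_eq mod_add_left_eq plus_nat.simps(2))
    finally show "rotate1 w ! ((j + d) mod L) = w ! ((Suc j mod L + d) mod L)" .
  qed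
  show "(LEAST d. 0 < d \<and> is_P (rotate1 w ! ((j + d) mod L))) =
    (LEAST d. 0 < d \<and> is_P (w ! ((Suc j mod L + d) mod L)))" unfolding eq by (rule refl)
qed


lemma nth_swap:
  assumes "a < length w" "b < length w" "m < length w"
  shows "swap_at w a b ! m = (if m = b then w ! a else if m = a then w ! b else w ! m)"
  using assms unfolding swap_at_def by (auto simp: nth_list_update)

lemma swap_rot:
  assumes len: "length w = L" and a: "a < L" and b: "b < L"
  shows "swap_at (rotate1 w) a b = rotate1 (swap_at w (Suc a mod L) (Suc b mod L))"
proof (rule nth_equalityI)
  show "length (swap_at (rotate1 w) a b) = length (rotate1 (swap_at w (Suc a mod L) (Suc b mod L)))"
    by (simp add: swap_at_def)
  fix m assume "m < length (swap_at (rotate1 w) a b)"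
  then have m: "m < L" using len by (simp add: swap_at_def)
  have L0: "0 < L" using m by simp
  have A: "Suc a mod L < L" "Suc b mod L < L" "Suc m mod L < L" using L0 by auto
  have l: "swap_at (rotate1 w) a b ! m = (if m = b then w ! (Suc a mod L) else if m = a then w ! (Suc b mod L) else w ! (Suc m mod L))"
    using nth_swap[of a "rotate1 w" b m] len a b m nth_rot1[OF len] by simp
  have r: "rotate1 (swap_at w (Suc a mod L) (Suc b mod L)) ! m = swap_at w (Suc a mod L) (Suc b mod L) ! (Suc m mod L)"
    using nth_rot1[of "swap_at w (Suc a mod L) (Suc b mod L)" L m] len m by (simp add: swap_at_def)
  also have "\<dots> = (if Suc m mod L = Suc b mod L then w ! (Suc a mod L) else if Suc m mod L = Suc a mod L then w ! (Suc b mod L) else w ! (Suc m mod L))"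
    using nth_swap[of "Suc a mod L" w "Suc b mod L" "Suc m mod L"] A len by simp
  also have "\<dots> = (if m = b then w ! (Suc a mod L) else if m = a then w ! (Suc b mod L) else w ! (Suc m mod L))"
    using suc_mod_inj[OF m, of b] suc_mod_inj[OF m, of a] a b by simp
  finally show "swap_at (rotate1 w) a b ! m = rotate1 (swap_at w (Suc a mod L) (Suc b mod L)) ! m"
    using l by simp
qed

lemma modL_pred: fixes m L :: nat assumes "m < L" shows "(m + L - 1) mod L = (m + (L - 1)) mod L"
  using assms by simp

lemma rot_pred: assumes len: "length w = L" and m: "m < L"
  shows "rotate1 w ! ((m + L - 1) mod L) = w ! m"
proof -
  have L0: "0 < L" using m by simp
  have "(m + L - 1) mod L < L" using L0 by simp
  then have "rotate1 w ! ((m + L - 1) mod L) = w ! (Suc ((m + L - 1) mod L) mod L)"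
    using nth_rot1[OF len] by blast
  also have "Suc ((m + L - 1) mod L) mod L = Suc (m + L - 1) mod L" by (rule mod_Suc_eq)
  also have "Suc (m + L - 1) = m + L" using L0 by simp
  also have "(m + L) mod L = m" using m by simp
  finally show ?thesis .
qed

lemma pred_suc: fixes m L :: nat assumes m: "m < L" shows "(Suc m mod L + L - 1) mod L = m"
proof -
  have L0: "0 < L" using m by simp
  have "Suc m mod L + L - 1 = Suc m mod L + (L - 1)" using L0 by simp
  then have "(Suc m mod L + L - 1) mod L = (Suc m + (L - 1)) mod L" by (simp add: mod_add_left_eq)
  also have "Suc m + (L - 1) = m + L" using L0 by simp
  finally show ?thesis using m by simp
qed

lemma t2_cond: fixes j L d x :: nat assumes "d \<le> L"
  shows "(Suc j mod L + 1 + L - d + x) mod L = Suc (j + 1 + L - d + x) mod L"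
proof -
  have a: "Suc j mod L + 1 + L - d + x = Suc j mod L + (1 + (L - d) + x)" using assms by simp
  have b: "Suc (j + 1 + L - d + x) = Suc j + (1 + (L - d) + x)" using assms by simp
  show ?thesis unfolding a b by (rule mod_add_left_eq)
qed

lemma t2_rot:
  assumes len: "length w = L" and j: "j < L" and isp: "is_P (w ! (Suc j mod L))"
  shows "t2_res L n (rotate1 w) j k = rotate1 (t2_res L n w (Suc j mod L) k)"
proof -
  define J where "J = Suc j mod L"
  define d where "d = dback L w J"
  have L0: "0 < L" using j by simp
  have dd: "dback L (rotate1 w) j = d" unfolding d_def J_def using dback_rot[OF len j isp] .
  have dL: "d \<le> L" unfolding d_def dback_def
    by (rule Least_le) (use isp L0 J_def in simp)
  show ?thesis
  proof (rule nth_equalityI)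
    show "length (t2_res L n (rotate1 w) j k) = length (rotate1 (t2_res L n w (Suc j mod L) k))"
      by (simp add: t2_res_def Let_def)
    fix m assume "m < length (t2_res L n (rotate1 w) j k)"
    then have m: "m < L" by (simp add: t2_res_def Let_def)
    have sm: "Suc m mod L < L" using L0 by simp
    have l: "t2_res L n (rotate1 w) j k ! m =
      (if m = (j + 1) mod L then P k
       else if m = (j + 1 + L - d) mod L then H ((k + n - 1) mod n)
       else if (\<exists>t\<in>{1..<d}. m = (j + 1 + L - d + t) mod L) then w ! m
       else w ! (Suc m mod L))"
      using m rot_pred[OF len m] nth_rot1[OF len m] unfolding t2_res_def Let_def dd by simp
    have r0: "rotate1 (t2_res L n w J k) ! m = t2_res L n w J k ! (Suc m mod L)"
      using nth_rot1[of "t2_res L n w J k" L m] m by (simp add: t2_res_def Let_def)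
    have r1: "t2_res L n w J k ! (Suc m mod L) =
      (if Suc m mod L = (J + 1) mod L then P k
       else if Suc m mod L = (J + 1 + L - d) mod L then H ((k + n - 1) mod n)
       else if (\<exists>t\<in>{1..<d}. Suc m mod L = (J + 1 + L - d + t) mod L) then w ! m
       else w ! (Suc m mod L))"
      using sm pred_suc[OF m] unfolding t2_res_def Let_def d_def[symmetric] by simp
    have c1: "(Suc m mod L = (J + 1) mod L) = (m = (j + 1) mod L)"
      unfolding J_def using suc_mod_inj[OF m, of "Suc j"] by (simp add: mod_Suc_eq)
    have c2: "(Suc m mod L = (J + 1 + L - d) mod L) = (m = (j + 1 + L - d) mod L)"
      unfolding J_def using suc_mod_inj[OF m, of "j + 1 + L - d"] t2_cond[OF dL, of j 0] by simp
    have c3: "(\<exists>t\<in>{1..<d}. Suc m mod L = (J + 1 + L - d + t) mod L) = (\<exists>t\<in>{1..<d}. m = (j + 1 + L - d + t) mod L)"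
    proof -
      have "\<And>t. (Suc m mod L = (J + 1 + L - d + t) mod L) = (m = (j + 1 + L - d + t) mod L)"
        unfolding J_def using suc_mod_inj[OF m] t2_cond[OF dL, of j] by simp
      then show ?thesis by simp
    qed
    show "t2_res L n (rotate1 w) j k ! m = rotate1 (t2_res L n w (Suc j mod L) k) ! m"
      unfolding J_def[symmetric] r0 r1 l c1 c2 c3 by (rule refl)
  qed
qed


lemma t4_cond: fixes j L x :: nat assumes "0 < L"
  shows "(Suc j mod L + L - 1 + x) mod L = Suc (j + L - 1 + x) mod L"
proof -
  have a: "Suc j mod L + L - 1 + x = Suc j mod L + ((L - 1) + x)" using assms by simp
  have b: "Suc (j + L - 1 + x) = Suc j + ((L - 1) + x)" using assms by simp
  show ?thesis unfolding a b by (rule mod_add_left_eq)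
qed

lemma t4_cond2: fixes j L d :: nat assumes "0 < L"
  shows "(Suc j mod L + d + L - 1) mod L = Suc (j + d + L - 1) mod L"
proof -
  have a: "Suc j mod L + d + L - 1 = Suc j mod L + (d + (L - 1))" using assms by simp
  have b: "Suc (j + d + L - 1) = Suc j + (d + (L - 1))" using assms by simp
  show ?thesis unfolding a b by (rule mod_add_left_eq)
qed

lemma t4_rot:
  assumes len: "length w = L" and j: "j < L"
  shows "t4_res L n (rotate1 w) j k = rotate1 (t4_res L n w (Suc j mod L) k)"
proof -
  define J where "J = Suc j mod L"
  define d where "d = dfwd L w J"
  have L0: "0 < L" using j by simp
  have dd: "dfwd L (rotate1 w) j = d" unfolding d_def J_def using dfwd_rot[OF len j] .
  show ?thesis
  proof (rule nth_equalityI)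
    show "length (t4_res L n (rotate1 w) j k) = length (rotate1 (t4_res L n w (Suc j mod L) k))"
      by (simp add: t4_res_def Let_def)
    fix m assume "m < length (t4_res L n (rotate1 w) j k)"
    then have m: "m < L" by (simp add: t4_res_def Let_def)
    have sm: "Suc m mod L < L" using L0 by simp
    have v: "rotate1 w ! ((m + 1) mod L) = w ! ((Suc m mod L + 1) mod L)"
      using nth_rot1[OF len, of "(m + 1) mod L"] L0 by simp
    have l: "t4_res L n (rotate1 w) j k ! m =
      (if m = (j + L - 1) mod L then P k
       else if m = (j + d + L - 1) mod L then H ((k + 1) mod n)
       else if (\<exists>t\<in>{1..<d}. m = (j + L - 1 + t) mod L) then w ! ((Suc m mod L + 1) mod L)
       else w ! (Suc m mod L))"
      using m v nth_rot1[OF len m] unfolding t4_res_def Let_def dd by simp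
    have r0: "rotate1 (t4_res L n w J k) ! m = t4_res L n w J k ! (Suc m mod L)"
      using nth_rot1[of "t4_res L n w J k" L m] m by (simp add: t4_res_def Let_def)
    have r1: "t4_res L n w J k ! (Suc m mod L) =
      (if Suc m mod L = (J + L - 1) mod L then P k
       else if Suc m mod L = (J + d + L - 1) mod L then H ((k + 1) mod n)
       else if (\<exists>t\<in>{1..<d}. Suc m mod L = (J + L - 1 + t) mod L) then w ! ((Suc m mod L + 1) mod L)
       else w ! (Suc m mod L))"
      using sm unfolding t4_res_def Let_def d_def[symmetric] by simp
    have c1: "(Suc m mod L = (J + L - 1) mod L) = (m = (j + L - 1) mod L)"
      unfolding J_def using suc_mod_inj[OF m, of "j + L - 1"] t4_cond[OF L0, of j 0] by simp
    have c2: "(Suc m mod L = (J + d + L - 1) mod L) = (m = (j + d + L - 1) mod L)"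
      unfolding J_def using suc_mod_inj[OF m, of "j + d + L - 1"] t4_cond2[OF L0, of j d] by simp
    have c3: "(\<exists>t\<in>{1..<d}. Suc m mod L = (J + L - 1 + t) mod L) = (\<exists>t\<in>{1..<d}. m = (j + L - 1 + t) mod L)"
    proof -
      have "\<And>t. (Suc m mod L = (J + L - 1 + t) mod L) = (m = (j + L - 1 + t) mod L)"
        unfolding J_def using suc_mod_inj[OF m] t4_cond[OF L0, of j] by simp
      then show ?thesis by simp
    qed
    show "t4_res L n (rotate1 w) j k ! m = rotate1 (t4_res L n w (Suc j mod L) k) ! m"
      unfolding J_def[symmetric] r0 r1 l c1 c2 c3 by (rule refl)
  qed
qed

lemma idx_succ: fixes j L :: nat assumes "j < L"
  shows "Suc (Suc j mod L) mod L = Suc (Suc j) mod L"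
  by (simp add: mod_Suc_eq)

lemma rate_at_rot:
  assumes len: "length w = L" and len': "length w' = L" and j: "j < L"
  shows "rate_at L n p q (rotate1 w) (rotate1 w') j = rate_at L n p q w w' (Suc j mod L)"
proof -
  define J where "J = Suc j mod L"
  have L0: "0 < L" using j by simp
  have J: "J < L" using L0 J_def by simp
  have e0: "rotate1 w ! j = w ! J" using nth_rot1[OF len j] J_def by simp
  have e1: "rotate1 w ! ((j + 1) mod L) = w ! ((J + 1) mod L)"
    using nth_rot1[OF len, of "(j+1) mod L"] L0 J_def by (simp add: mod_Suc_eq)
  have e2: "rotate1 w ! ((j + L - 1) mod L) = w ! ((J + L - 1) mod L)"
  proof -
    have "rotate1 w ! ((j + L - 1) mod L) = w ! j" using rot_pred[OF len j] .
    moreover have "(J + L - 1) mod L = j" using pred_suc[OF j] J_def by simp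
    ultimately show ?thesis by simp
  qed
  have s1: "swap_at (rotate1 w) j ((j + 1) mod L) = rotate1 (swap_at w J ((J + 1) mod L))"
    using swap_rot[OF len j, of "(j + 1) mod L"] L0 J_def by (simp add: mod_Suc_eq)
  have s2: "swap_at (rotate1 w) j ((j + L - 1) mod L) = rotate1 (swap_at w J ((J + L - 1) mod L))"
  proof -
    have "Suc ((j + L - 1) mod L) mod L = (J + L - 1) mod L"
      using t4_cond[OF L0, of j 0] J_def by (simp add: mod_Suc_eq)
    then show ?thesis using swap_rot[OF len j, of "(j + L - 1) mod L"] L0 J_def by simp
  qed
  have inj: "\<And>x y. (rotate1 x = rotate1 y) = (x = y)" using inj_rotate1 by (auto dest: injD)
  show ?thesis
  proof (cases "w ! J")
    case (P k)
    have isp: "is_P (w ! (Suc j mod L))" using P J_def by (simp add: is_P_def)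
    have t2: "t2_res L n (rotate1 w) j k = rotate1 (t2_res L n w J k)"
      using t2_rot[OF len j isp] J_def by simp
    have t4: "t4_res L n (rotate1 w) j k = rotate1 (t4_res L n w J k)"
      using t4_rot[OF len j] J_def by simp
    show ?thesis unfolding rate_at_def J_def[symmetric] e0 e1 e2 P letter.case s1 s2 t2 t4 inj
      by (rule refl)
  next
    case (H x)
    show ?thesis unfolding rate_at_def J_def[symmetric] e0 H by simp
  qed
qed

lemma sum_rot_index:
  fixes f :: "nat \<Rightarrow> real"
  assumes "0 < L"
  shows "(\<Sum>j<L. f (Suc j mod L)) = (\<Sum>j<L. f j)"
proof -
  obtain L' where L': "L = Suc L'" using assms by (cases L) auto
  have "(\<Sum>j<L. f (Suc j mod L)) = (\<Sum>j<L'. f (Suc j mod L)) + f (Suc L' mod L)"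
    unfolding L' by simp
  also have "(\<Sum>j<L'. f (Suc j mod L)) = (\<Sum>j<L'. f (Suc j))"
    by (rule sum.cong) (auto simp: L')
  also have "f (Suc L' mod L) = f 0" using L' by simp
  also have "(\<Sum>j<L'. f (Suc j)) + f 0 = (\<Sum>j<L. f j)"
    unfolding L' sum.lessThan_Suc_shift by simp
  finally show ?thesis .
qed

lemma rate_rot1:
  assumes len: "length w = L" and len': "length w' = L" and L0: "0 < L"
  shows "rate L n p q (rotate1 w) (rotate1 w') = rate L n p q w w'"
  unfolding rate_def
  using rate_at_rot[OF len len'] sum_rot_index[OF L0, of "rate_at L n p q w w'"]
  by simp

lemma rate_rot:
  assumes len: "length w = L" and len': "length w' = L" and L0: "0 < L"
  shows "rate L n p q (rotate s w) (rotate s w') = rate L n p q w w'"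
proof (induction s)
  case 0 then show ?case by simp
next
  case (Suc s)
  have "rate L n p q (rotate (Suc s) w) (rotate (Suc s) w') = rate L n p q (rotate s w) (rotate s w')"
    using rate_rot1[of "rotate s w" L "rotate s w'"] len len' L0 by simp
  then show ?case using Suc by simp
qed


lemma pl_append: "[k. P k \<leftarrow> xs @ ys] = [k. P k \<leftarrow> xs] @ [k. P k \<leftarrow> ys]"
  by simp

lemma pl_rotate1: "\<exists>r. [k. P k \<leftarrow> rotate1 w] = rotate r [k. P k \<leftarrow> w]"
proof (cases w)
  case Nil then show ?thesis by simp
next
  case (Cons a xs)
  have "[k. P k \<leftarrow> rotate1 w] = [k. P k \<leftarrow> xs] @ [k. P k \<leftarrow> [a]]" using Cons by simp
  also have "\<dots> = rotate (length [k. P k \<leftarrow> [a]]) ([k. P k \<leftarrow> [a]] @ [k. P k \<leftarrow> xs])"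
    by (rule rotate_append[symmetric])
  also have "[k. P k \<leftarrow> [a]] @ [k. P k \<leftarrow> xs] = [k. P k \<leftarrow> w]" using Cons by simp
  finally show ?thesis by blast
qed

lemma count_rotate1: "count_list (rotate1 w) x = count_list w x"
  by (cases w) auto

lemma omega_rotate1: "w \<in> omega L n \<Longrightarrow> rotate1 w \<in> omega L n"
proof -
  assume w: "w \<in> omega L n"
  then obtain r where r: "[k. P k \<leftarrow> w] = rotate r [0..<n]" unfolding omega_def by blast
  obtain r' where r': "[k. P k \<leftarrow> rotate1 w] = rotate r' [k. P k \<leftarrow> w]" using pl_rotate1 by blast
  have "[k. P k \<leftarrow> rotate1 w] = rotate (r' + r) [0..<n]" using r r' by (simp add: rotate_rotate)
  then show ?thesis using w unfolding omega_def by (auto simp: count_rotate1)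
qed

lemma omega_rotate: "w \<in> omega L n \<Longrightarrow> rotate s w \<in> omega L n"
  by (induction s) (auto simp: omega_rotate1)

lemma omega_len: "w \<in> omega L n \<Longrightarrow> length w = L"
  unfolding omega_def by simp

lemma finite_omega: "finite (omega L n)"
proof -
  have "omega L n \<subseteq> {xs. set xs \<subseteq> (P ` {..<n} \<union> H ` {..<n}) \<and> length xs = L}"
  proof
    fix w assume w: "w \<in> omega L n"
    have "set w \<subseteq> P ` {..<n} \<union> H ` {..<n}"
    proof
      fix x assume "x \<in> set w"
      then have "label_ok n x" using w unfolding omega_def by blast
      then show "x \<in> P ` {..<n} \<union> H ` {..<n}" unfolding label_ok_def
        by (cases x) auto
    qed
    then show "w \<in> {xs. set xs \<subseteq> (P ` {..<n} \<union> H ` {..<n}) \<and> length xs = L}"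
      using w omega_len by blast
  qed
  moreover have "finite {xs. set xs \<subseteq> (P ` {..<n} \<union> H ` {..<n}) \<and> length xs = L}"
    by (rule finite_lists_length_eq) simp
  ultimately show ?thesis by (rule finite_subset)
qed

lemma rotate1_image_omega: "rotate1 ` omega L n = omega L n"
proof
  show "rotate1 ` omega L n \<subseteq> omega L n" using omega_rotate1 by blast
  show "omega L n \<subseteq> rotate1 ` omega L n"
  proof
    fix w assume w: "w \<in> omega L n"
    have "rotate1 (rotate (length w - 1) w) = rotate (Suc (length w - 1)) w" by simp
    also have "\<dots> = w"
    proof (cases "w = []")
      case True then show ?thesis by simp
    next
      case False then have "Suc (length w - 1) = length w" by simp
      then show ?thesis by simp
    qed
    finally show "w \<in> rotate1 ` omega L n" using omega_rotate[OF w] by (metis image_eqI)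
  qed
qed

lemma inj_on_rotate1: "inj_on rotate1 A"
  by (rule inj_on_subset[OF inj_rotate1]) simp

lemma label_in_omega:
  assumes "w \<in> omega L n" "j < L" shows "label_ok n (w ! j)"
  using assms unfolding omega_def by auto

lemma rate_at_nonneg:
  assumes w: "w \<in> omega L n" and pq: "\<forall>k<n. 0 < p k" "\<forall>k<n. 0 < q k" and j: "j < L"
  shows "0 \<le> rate_at L n p q w w' j"
proof (cases "w ! j")
  case (P k)
  then have k: "k < n" using label_in_omega[OF w j] by (simp add: label_ok_def)
  then have "0 < p k" "0 < q k" using pq by auto
  then show ?thesis unfolding rate_at_def P
    by (auto split: letter.split intro!: add_nonneg_nonneg)
next
  case (H x) then show ?thesis unfolding rate_at_def by simp
qed

lemma rate_nonneg:
  assumes w: "w \<in> omega L n" and pq: "\<forall>k<n. 0 < p k" "\<forall>k<n. 0 < q k"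
  shows "0 \<le> rate L n p q w w'"
  unfolding rate_def by (rule sum_nonneg) (use rate_at_nonneg[OF w pq] in auto)

lemma rate_ge_at:
  assumes w: "w \<in> omega L n" and pq: "\<forall>k<n. 0 < p k" "\<forall>k<n. 0 < q k" and j: "j < L"
  shows "rate_at L n p q w w' j \<le> rate L n p q w w'"
  unfolding rate_def
  by (rule member_le_sum) (use rate_at_nonneg[OF w pq] j in auto)


locale chn =
  fixes L n :: nat and p q :: "nat \<Rightarrow> real"
  assumes n1: "1 \<le> n" and nL: "n < L" and pp: "\<forall>k<n. 0 < p k" and qp: "\<forall>k<n. 0 < q k"
begin

abbreviation Om where "Om \<equiv> omega L n"
abbreviation r where "r \<equiv> rate L n p q"

definition step :: "letter list \<Rightarrow> letter list \<Rightarrow> bool" where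
  "step w w' \<longleftrightarrow> w \<in> Om \<and> w' \<in> Om \<and> w \<noteq> w' \<and> 0 < r w w'"

definition bal :: "(letter list \<Rightarrow> real) \<Rightarrow> bool" where
  "bal \<nu> \<longleftrightarrow> (\<forall>w\<in>Om. (\<Sum>w'\<in>Om - {w}. \<nu> w' * r w' w) = \<nu> w * (\<Sum>w'\<in>Om - {w}. r w w'))"

lemma rnn: "w \<in> Om \<Longrightarrow> 0 \<le> r w w'"
  using rate_nonneg pp qp by blast

lemma pos_step:
  assumes nn: "\<forall>w\<in>Om. 0 \<le> \<nu> w" and b: "bal \<nu>" and s: "step w w'" and pw: "0 < \<nu> w"
  shows "0 < \<nu> w'"
proof -
  have w: "w \<in> Om" and w': "w' \<in> Om" and ne: "w \<noteq> w'" and rp: "0 < r w w'"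
    using s unfolding step_def by auto
  have "\<nu> w * r w w' \<le> (\<Sum>v\<in>Om - {w'}. \<nu> v * r v w')"
    by (rule member_le_sum[where f = "\<lambda>v. \<nu> v * r v w'"]) (use w ne nn rnn finite_omega in auto)
  moreover have "0 < \<nu> w * r w w'" using pw rp by simp
  ultimately have "0 < \<nu> w' * (\<Sum>v\<in>Om - {w'}. r w' v)" using b w' unfolding bal_def by auto
  then have "\<nu> w' \<noteq> 0" by auto
  then show ?thesis using nn w' by force
qed

lemma pos_reach:
  assumes nn: "\<forall>w\<in>Om. 0 \<le> \<nu> w" and b: "bal \<nu>"
  shows "step\<^sup>*\<^sup>* w w' \<Longrightarrow> 0 < \<nu> w \<Longrightarrow> 0 < \<nu> w'"
proof (induction rule: rtranclp_induct)
  case base then show ?case by simp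
next
  case (step y z) then show ?case using pos_step[OF nn b] by blast
qed

lemma sum_swap_offdiag:
  fixes g :: "'a \<Rightarrow> 'a \<Rightarrow> real"
  assumes "finite A"
  shows "(\<Sum>w\<in>A. \<Sum>v\<in>A - {w}. g v w) = (\<Sum>w\<in>A. \<Sum>v\<in>A - {w}. g w v)"
proof -
  have e: "\<And>h :: 'a \<Rightarrow> 'a \<Rightarrow> real. (\<Sum>w\<in>A. \<Sum>v\<in>A - {w}. h v w) = (\<Sum>w\<in>A. \<Sum>v\<in>A. if v = w then 0 else h v w)"
  proof -
    fix h :: "'a \<Rightarrow> 'a \<Rightarrow> real"
    show "(\<Sum>w\<in>A. \<Sum>v\<in>A - {w}. h v w) = (\<Sum>w\<in>A. \<Sum>v\<in>A. if v = w then 0 else h v w)"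
    proof (rule sum.cong[OF refl])
      fix w assume "w \<in> A"
      show "(\<Sum>v\<in>A - {w}. h v w) = (\<Sum>v\<in>A. if v = w then 0 else h v w)"
        using assms by (simp add: sum.If_cases Diff_eq Int_commute)
    qed
  qed
  have "(\<Sum>w\<in>A. \<Sum>v\<in>A. if v = w then 0 else g v w) = (\<Sum>v\<in>A. \<Sum>w\<in>A. if v = w then 0 else g v w)"
    by (rule sum.swap)
  also have "\<dots> = (\<Sum>w\<in>A. \<Sum>v\<in>A. if v = w then 0 else g w v)"
    by (rule sum.cong[OF refl], rule sum.cong[OF refl]) auto
  finally show ?thesis using e[of g] e[of "\<lambda>a b. g b a"] by simp
qed

lemma flow_zero:
  assumes nn: "\<forall>w\<in>Om. 0 \<le> \<nu> w" and b: "bal \<nu>" and A: "A \<subseteq> Om"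
    and inflow: "\<forall>w\<in>A. \<forall>v\<in>Om - A. \<nu> v * r v w = 0"
  shows "\<forall>w\<in>A. \<forall>v\<in>Om - A. \<nu> w * r w v = 0"
proof -
  have fA: "finite A" using A finite_omega finite_subset by blast
  have split: "\<And>f w. w \<in> A \<Longrightarrow> (\<Sum>v\<in>Om - {w}. f v :: real) = (\<Sum>v\<in>A - {w}. f v) + (\<Sum>v\<in>Om - A. f v)"
  proof -
    fix f :: "letter list \<Rightarrow> real" and w assume w: "w \<in> A"
    have "Om - {w} = (A - {w}) \<union> (Om - A)" using A w by auto
    then show "(\<Sum>v\<in>Om - {w}. f v) = (\<Sum>v\<in>A - {w}. f v) + (\<Sum>v\<in>Om - A. f v)"
      using finite_omega fA by (simp add: sum.union_disjoint Diff_Int_distrib2 inf_commute)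
  qed
  have "(\<Sum>w\<in>A. \<Sum>v\<in>Om - {w}. \<nu> v * r v w) = (\<Sum>w\<in>A. \<nu> w * (\<Sum>v\<in>Om - {w}. r w v))"
    using b A unfolding bal_def by (intro sum.cong) auto
  also have "\<dots> = (\<Sum>w\<in>A. \<Sum>v\<in>Om - {w}. \<nu> w * r w v)"
    by (simp add: sum_distrib_left)
  finally have eq: "(\<Sum>w\<in>A. \<Sum>v\<in>Om - {w}. \<nu> v * r v w) = (\<Sum>w\<in>A. \<Sum>v\<in>Om - {w}. \<nu> w * r w v)" .
  have l: "(\<Sum>w\<in>A. \<Sum>v\<in>Om - {w}. \<nu> v * r v w) = (\<Sum>w\<in>A. \<Sum>v\<in>A - {w}. \<nu> v * r v w)"
  proof -
    have "(\<Sum>w\<in>A. \<Sum>v\<in>Om - {w}. \<nu> v * r v w) = (\<Sum>w\<in>A. (\<Sum>v\<in>A - {w}. \<nu> v * r v w) + (\<Sum>v\<in>Om - A. \<nu> v * r v w))"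
      by (rule sum.cong[OF refl]) (rule split)
    also have "\<dots> = (\<Sum>w\<in>A. \<Sum>v\<in>A - {w}. \<nu> v * r v w) + (\<Sum>w\<in>A. \<Sum>v\<in>Om - A. \<nu> v * r v w)"
      by (simp add: sum.distrib)
    also have "(\<Sum>w\<in>A. \<Sum>v\<in>Om - A. \<nu> v * r v w) = 0"
      by (intro sum.neutral ballI) (use inflow in blast)
    finally show ?thesis by simp
  qed
  have rr: "(\<Sum>w\<in>A. \<Sum>v\<in>Om - {w}. \<nu> w * r w v) = (\<Sum>w\<in>A. \<Sum>v\<in>A - {w}. \<nu> w * r w v) + (\<Sum>w\<in>A. \<Sum>v\<in>Om - A. \<nu> w * r w v)"
  proof -
    have "(\<Sum>w\<in>A. \<Sum>v\<in>Om - {w}. \<nu> w * r w v) = (\<Sum>w\<in>A. (\<Sum>v\<in>A - {w}. \<nu> w * r w v) + (\<Sum>v\<in>Om - A. \<nu> w * r w v))"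
      by (rule sum.cong[OF refl]) (rule split)
    then show ?thesis by (simp add: sum.distrib)
  qed
  have sw: "(\<Sum>w\<in>A. \<Sum>v\<in>A - {w}. \<nu> v * r v w) = (\<Sum>w\<in>A. \<Sum>v\<in>A - {w}. \<nu> w * r w v)"
    using sum_swap_offdiag[OF fA, of "\<lambda>v w. \<nu> v * r v w"] by simp
  have z: "(\<Sum>w\<in>A. \<Sum>v\<in>Om - A. \<nu> w * r w v) = 0" using eq l rr sw by simp
  have nnt: "\<And>w v. w \<in> A \<Longrightarrow> v \<in> Om - A \<Longrightarrow> 0 \<le> \<nu> w * r w v"
    using A nn rnn by (meson mult_nonneg_nonneg subsetD)
  have inner: "\<forall>w\<in>A. (\<Sum>v\<in>Om - A. \<nu> w * r w v) = 0"
    using z fA by (subst (asm) sum_nonneg_eq_0_iff) (auto intro!: sum_nonneg nnt)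
  show ?thesis
  proof (intro ballI)
    fix w v assume w: "w \<in> A" and v: "v \<in> Om - A"
    have fO: "finite (Om - A)" using finite_omega by simp
    have "(\<Sum>v\<in>Om - A. \<nu> w * r w v) = 0" using inner w by blast
    then have "\<forall>v\<in>Om - A. \<nu> w * r w v = 0"
      using sum_nonneg_eq_0_iff[OF fO, of "\<lambda>v. \<nu> w * r w v"] nnt[OF w] by blast
    then show "\<nu> w * r w v = 0" using v by blast
  qed
qed

lemma transient:
  assumes nn: "\<forall>w\<in>Om. 0 \<le> \<nu> w" and b: "bal \<nu>" and z0: "z0 \<in> Om"
    and reach: "\<forall>w\<in>Om. step\<^sup>*\<^sup>* w z0"
    and w: "w \<in> Om" and pw: "0 < \<nu> w"
  shows "step\<^sup>*\<^sup>* z0 w"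
proof (rule ccontr)
  assume nw: "\<not> step\<^sup>*\<^sup>* z0 w"
  define A where "A = {x \<in> Om. 0 < \<nu> x \<and> \<not> step\<^sup>*\<^sup>* z0 x}"
  have AO: "A \<subseteq> Om" unfolding A_def by auto
  have inflow: "\<forall>x\<in>A. \<forall>v\<in>Om - A. \<nu> v * r v x = 0"
  proof (intro ballI)
    fix x v assume x: "x \<in> A" and v: "v \<in> Om - A"
    show "\<nu> v * r v x = 0"
    proof (cases "\<nu> v = 0")
      case True then show ?thesis by simp
    next
      case False
      then have "0 < \<nu> v" using nn v by force
      then have zv: "step\<^sup>*\<^sup>* z0 v" using v unfolding A_def by auto
      have "\<not> 0 < r v x"
      proof
        assume "0 < r v x"
        then have "step v x" unfolding step_def using v x AO by auto
        then have "step\<^sup>*\<^sup>* z0 x" using zv by auto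
        then show False using x unfolding A_def by auto
      qed
      then have "r v x = 0" using rnn[of v x] v by auto
      then show ?thesis by simp
    qed
  qed
  have out: "\<forall>x\<in>A. \<forall>v\<in>Om - A. \<nu> x * r x v = 0" by (rule flow_zero[OF nn b AO inflow])
  have closed: "step\<^sup>*\<^sup>* x y \<Longrightarrow> x \<in> A \<Longrightarrow> y \<in> A" for x y
  proof (induction rule: rtranclp_induct)
    case base then show ?case .
  next
    case (step y' z')
    show ?case
    proof (rule ccontr)
      assume "z' \<notin> A"
      moreover have "z' \<in> Om" "0 < r y' z'" using step(2) unfolding step_def by auto
      moreover have "0 < \<nu> y'" using step(3)[OF step(4)] unfolding A_def by auto
      ultimately show False using out step(3)[OF step(4)] by fastforce
    qed
  qed
  have "w \<in> A" unfolding A_def using w pw nw by auto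
  then have "z0 \<in> A" using closed reach w by blast
  then show False unfolding A_def by auto
qed

definition stat :: "(letter list \<Rightarrow> real) \<Rightarrow> bool" where
  "stat \<nu> \<longleftrightarrow> (\<forall>w\<in>Om. 0 \<le> \<nu> w) \<and> (\<Sum>w\<in>Om. \<nu> w) = 1 \<and> bal \<nu>"

lemma stat_iff: "stationary_dist L n p q \<nu> = stat \<nu>"
  unfolding stationary_dist_def stat_def bal_def by simp

lemma stat_support:
  assumes st: "stat \<nu>" and z0: "z0 \<in> Om" and reach: "\<forall>w\<in>Om. step\<^sup>*\<^sup>* w z0"
    and w: "w \<in> Om"
  shows "0 < \<nu> w \<longleftrightarrow> step\<^sup>*\<^sup>* z0 w"
proof -
  have nn: "\<forall>w\<in>Om. 0 \<le> \<nu> w" and b: "bal \<nu>" and s1: "(\<Sum>w\<in>Om. \<nu> w) = 1"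
    using st unfolding stat_def by auto
  obtain u where u: "u \<in> Om" "0 < \<nu> u"
  proof (rule ccontr)
    assume "\<not> thesis"
    then have "\<forall>u\<in>Om. \<nu> u = 0" using nn that by force
    then have "(\<Sum>w\<in>Om. \<nu> w) = 0" by simp
    then show False using s1 by simp
  qed
  have pz: "0 < \<nu> z0" using pos_reach[OF nn b] reach u by blast
  show ?thesis using transient[OF nn b z0 reach w] pos_reach[OF nn b _ pz] by blast
qed

lemma uniqueness:
  assumes st1: "stat \<pi>" and st2: "stat \<sigma>" and z0: "z0 \<in> Om" and reach: "\<forall>w\<in>Om. step\<^sup>*\<^sup>* w z0"
  shows "\<forall>w\<in>Om. \<pi> w = \<sigma> w"
proof -
  define C where "C = {w \<in> Om. step\<^sup>*\<^sup>* z0 w}"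
  have fC: "finite C" unfolding C_def using finite_omega by simp
  have zC: "z0 \<in> C" unfolding C_def using z0 by simp
  have nn1: "\<forall>w\<in>Om. 0 \<le> \<pi> w" and b1: "bal \<pi>" and s1: "(\<Sum>w\<in>Om. \<pi> w) = 1"
    using st1 unfolding stat_def by auto
  have nn2: "\<forall>w\<in>Om. 0 \<le> \<sigma> w" and b2: "bal \<sigma>" and s2: "(\<Sum>w\<in>Om. \<sigma> w) = 1"
    using st2 unfolding stat_def by auto
  have sp1: "\<And>w. w \<in> Om \<Longrightarrow> 0 < \<pi> w \<longleftrightarrow> w \<in> C"
    using stat_support[OF st1 z0 reach] unfolding C_def by auto
  have sp2: "\<And>w. w \<in> Om \<Longrightarrow> 0 < \<sigma> w \<longleftrightarrow> w \<in> C"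
    using stat_support[OF st2 z0 reach] unfolding C_def by auto
  define c where "c = Min ((\<lambda>w. \<pi> w / \<sigma> w) ` C)"
  have cne: "(\<lambda>w. \<pi> w / \<sigma> w) ` C \<noteq> {}" using zC by auto
  obtain w0 where w0: "w0 \<in> C" "c = \<pi> w0 / \<sigma> w0"
    using Min_in[OF finite_imageI[OF fC] cne] unfolding c_def by auto
  have cle: "\<And>w. w \<in> C \<Longrightarrow> c \<le> \<pi> w / \<sigma> w"
    unfolding c_def using fC by simp
  define \<nu> where "\<nu> = (\<lambda>w. \<pi> w - c * \<sigma> w)"
  have CO: "C \<subseteq> Om" unfolding C_def by auto
  have nnv: "\<forall>w\<in>Om. 0 \<le> \<nu> w"
  proof
    fix w assume w: "w \<in> Om"
    show "0 \<le> \<nu> w"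
    proof (cases "w \<in> C")
      case True
      then have "0 < \<sigma> w" using sp2 w by auto
      moreover have "c \<le> \<pi> w / \<sigma> w" using cle True by auto
      ultimately show ?thesis unfolding \<nu>_def by (simp add: pos_le_divide_eq mult.commute)
    next
      case False
      then have "\<pi> w = 0" "\<sigma> w = 0" using sp1 sp2 w nn1 nn2 by force+
      then show ?thesis unfolding \<nu>_def by simp
    qed
  qed
  have bv: "bal \<nu>"
    unfolding bal_def
  proof
    fix w assume w: "w \<in> Om"
    have "(\<Sum>w'\<in>Om - {w}. \<nu> w' * r w' w) = (\<Sum>w'\<in>Om - {w}. \<pi> w' * r w' w) - c * (\<Sum>w'\<in>Om - {w}. \<sigma> w' * r w' w)"
      unfolding \<nu>_def by (simp add: left_diff_distrib sum_subtractf sum_distrib_left mult.assoc)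
    also have "\<dots> = \<pi> w * (\<Sum>w'\<in>Om - {w}. r w w') - c * (\<sigma> w * (\<Sum>w'\<in>Om - {w}. r w w'))"
      using b1 b2 w unfolding bal_def by simp
    also have "\<dots> = \<nu> w * (\<Sum>w'\<in>Om - {w}. r w w')" unfolding \<nu>_def by (simp add: algebra_simps)
    finally show "(\<Sum>w'\<in>Om - {w}. \<nu> w' * r w' w) = \<nu> w * (\<Sum>w'\<in>Om - {w}. r w w')" .
  qed
  have v0: "\<nu> w0 = 0"
  proof -
    have "0 < \<sigma> w0" using sp2 w0 CO by auto
    then show ?thesis unfolding \<nu>_def using w0 by simp
  qed
  have allz: "\<forall>w\<in>Om. \<nu> w = 0"
  proof (rule ccontr)
    assume "\<not> (\<forall>w\<in>Om. \<nu> w = 0)"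
    then obtain w where w: "w \<in> Om" "\<nu> w \<noteq> 0" by auto
    then have "0 < \<nu> w" using nnv by force
    then have "0 < \<nu> z0" using pos_reach[OF nnv bv] reach w by blast
    then have "0 < \<nu> w0" using pos_reach[OF nnv bv] w0 unfolding C_def by blast
    then show False using v0 by simp
  qed
  then have eqc: "\<forall>w\<in>Om. \<pi> w = c * \<sigma> w" unfolding \<nu>_def by simp
  then have "(\<Sum>w\<in>Om. \<pi> w) = c * (\<Sum>w\<in>Om. \<sigma> w)" by (simp add: sum_distrib_left)
  then have "c = 1" using s1 s2 by simp
  then show ?thesis using eqc by simp
qed

end

context chn
begin

lemma L0: "0 < L" using nL by simp

lemma rsym: "v \<in> Om \<Longrightarrow> w \<in> Om \<Longrightarrow> r (rotate1 v) (rotate1 w) = r v w"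
  using rate_rot1[of v L w n p q] omega_len L0 by blast

lemma sum_rot_reindex: "(\<Sum>w\<in>Om. f (rotate1 w)) = (\<Sum>w\<in>Om. f w)"
proof -
  have "(\<Sum>w\<in>rotate1 ` Om. f w) = (\<Sum>w\<in>Om. f (rotate1 w))"
    by (rule sum.reindex[OF inj_on_rotate1, unfolded comp_def])
  then show ?thesis using rotate1_image_omega by simp
qed

lemma stat_rot:
  assumes st: "stat \<pi>" shows "stat (\<lambda>w. \<pi> (rotate1 w))"
proof -
  have nn: "\<forall>w\<in>Om. 0 \<le> \<pi> w" and b: "bal \<pi>" and s1: "(\<Sum>w\<in>Om. \<pi> w) = 1"
    using st unfolding stat_def by auto
  have img: "\<And>w. w \<in> Om \<Longrightarrow> rotate1 ` (Om - {w}) = Om - {rotate1 w}"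
  proof -
    fix w
    have "rotate1 ` (Om - {w}) = rotate1 ` Om - rotate1 ` {w}" by (rule image_set_diff[OF inj_rotate1])
    then show "rotate1 ` (Om - {w}) = Om - {rotate1 w}" using rotate1_image_omega[of L n] by simp
  qed
  have "bal (\<lambda>w. \<pi> (rotate1 w))"
    unfolding bal_def
  proof
    fix w assume w: "w \<in> Om"
    have rw: "rotate1 w \<in> Om" using omega_rotate1[OF w] .
    have "(\<Sum>v\<in>Om - {w}. \<pi> (rotate1 v) * r v w) = (\<Sum>v\<in>Om - {w}. \<pi> (rotate1 v) * r (rotate1 v) (rotate1 w))"
      using rsym w by (intro sum.cong) auto
    also have "\<dots> = (\<Sum>u\<in>rotate1 ` (Om - {w}). \<pi> u * r u (rotate1 w))"
      by (rule sum.reindex[OF inj_on_rotate1, unfolded comp_def, symmetric])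
    also have "\<dots> = (\<Sum>u\<in>Om - {rotate1 w}. \<pi> u * r u (rotate1 w))" using img[OF w] by simp
    also have "\<dots> = \<pi> (rotate1 w) * (\<Sum>u\<in>Om - {rotate1 w}. r (rotate1 w) u)"
      using b rw unfolding bal_def by blast
    also have "(\<Sum>u\<in>Om - {rotate1 w}. r (rotate1 w) u) = (\<Sum>u\<in>rotate1 ` (Om - {w}). r (rotate1 w) u)"
      using img[OF w] by simp
    also have "\<dots> = (\<Sum>v\<in>Om - {w}. r (rotate1 w) (rotate1 v))"
      by (rule sum.reindex[OF inj_on_rotate1, unfolded comp_def])
    also have "\<dots> = (\<Sum>v\<in>Om - {w}. r w v)"
      using rsym w by (intro sum.cong) auto
    finally show "(\<Sum>v\<in>Om - {w}. \<pi> (rotate1 v) * r v w) = \<pi> (rotate1 w) * (\<Sum>v\<in>Om - {w}. r w v)" .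
  qed
  moreover have "(\<Sum>w\<in>Om. \<pi> (rotate1 w)) = 1" using sum_rot_reindex[of \<pi>] s1 by simp
  moreover have "\<forall>w\<in>Om. 0 \<le> \<pi> (rotate1 w)" using nn omega_rotate1 by blast
  ultimately show ?thesis unfolding stat_def by (intro conjI)
qed

lemma tau_rot: "j < L \<Longrightarrow> w \<in> Om \<Longrightarrow> tau i j (rotate1 w) = tau i (Suc j mod L) w"
proof -
  assume j: "j < L" and w: "w \<in> Om"
  have "rotate1 w ! j = w ! (Suc j mod L)" using nth_rot1[OF omega_len[OF w] j] .
  then show ?thesis by (simp add: tau_def)
qed

lemma eta_rot: "j < L \<Longrightarrow> w \<in> Om \<Longrightarrow> eta i j (rotate1 w) = eta i (Suc j mod L) w"
proof -
  assume j: "j < L" and w: "w \<in> Om"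
  have "rotate1 w ! j = w ! (Suc j mod L)" using nth_rot1[OF omega_len[OF w] j] .
  then show ?thesis by (simp add: eta_def)
qed

lemma expect_shift:
  assumes inv: "\<forall>w\<in>Om. \<pi> (rotate1 w) = \<pi> w"
    and f: "\<And>w. w \<in> Om \<Longrightarrow> f j (rotate1 w) = f (Suc j mod L) w"
  shows "expect L n \<pi> (f j) = expect L n \<pi> (f (Suc j mod L))"
proof -
  have "expect L n \<pi> (f j) = (\<Sum>w\<in>Om. \<pi> (rotate1 w) * f j (rotate1 w))"
    unfolding expect_def using sum_rot_reindex[of "\<lambda>w. \<pi> w * f j w"] by simp
  also have "\<dots> = expect L n \<pi> (f (Suc j mod L))"
    unfolding expect_def using inv f by (intro sum.cong) auto
  finally show ?thesis .
qed

lemma expect_const: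
  assumes inv: "\<forall>w\<in>Om. \<pi> (rotate1 w) = \<pi> w"
    and f: "\<And>j w. j < L \<Longrightarrow> w \<in> Om \<Longrightarrow> f j (rotate1 w) = f (Suc j mod L) w"
  shows "j < L \<Longrightarrow> expect L n \<pi> (f j) = expect L n \<pi> (f 0)"
proof (induction j)
  case 0 then show ?case by simp
next
  case (Suc j)
  then have "j < L" by simp
  have "expect L n \<pi> (f j) = expect L n \<pi> (f (Suc j mod L))"
    using expect_shift[where f=f and j=j, OF inv f[OF \<open>j < L\<close>]] by blast
  then show ?case using Suc by simp
qed

lemma sum_tau: assumes w: "w \<in> Om" and i: "i < n" shows "(\<Sum>j<L. tau i j w) = 1"
proof -
  have "(\<Sum>j<L. tau i j w) = real (card {j \<in> {..<L}. w ! j = P i})"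
    unfolding tau_def by (simp add: sum.If_cases Int_def)
  also have "{j \<in> {..<L}. w ! j = P i} = {j. j < length w \<and> P i = w ! j}"
    using omega_len[OF w] by auto
  also have "card \<dots> = count_list w (P i)"
    by (simp add: count_list_eq_length_filter length_filter_conv_card)
  also have "\<dots> = 1" using w i unfolding omega_def by auto
  finally show ?thesis by simp
qed

lemma main_from_reach:
  assumes st: "stat \<pi>" and z0: "z0 \<in> Om" and reach: "\<forall>w\<in>Om. step\<^sup>*\<^sup>* w z0"
  shows "(\<forall>i<n. \<forall>j<L. expect L n \<pi> (tau i j) = 1 / real L)
       \<and> (\<forall>i<n. \<forall>j<L. \<forall>j'<L. j < j' \<longrightarrow> expect L n \<pi> (eta i j) = expect L n \<pi> (eta i j'))"
proof -
  have inv: "\<forall>w\<in>Om. \<pi> (rotate1 w) = \<pi> w"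
    using uniqueness[OF stat_rot[OF st] st z0 reach] .
  have t0: "\<And>i j. j < L \<Longrightarrow> expect L n \<pi> (tau i j) = expect L n \<pi> (tau i 0)"
  proof -
    fix i j assume j: "j < L"
    show "expect L n \<pi> (tau i j) = expect L n \<pi> (tau i 0)"
      by (rule expect_const[where f = "\<lambda>j. tau i j", OF inv tau_rot j])
  qed
  have e0: "\<And>i j. j < L \<Longrightarrow> expect L n \<pi> (eta i j) = expect L n \<pi> (eta i 0)"
  proof -
    fix i j assume j: "j < L"
    show "expect L n \<pi> (eta i j) = expect L n \<pi> (eta i 0)"
      by (rule expect_const[where f = "\<lambda>j. eta i j", OF inv eta_rot j])
  qed
  have tt: "\<And>i. i < n \<Longrightarrow> expect L n \<pi> (tau i 0) = 1 / real L"
  proof -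
    fix i assume i: "i < n"
    have "(\<Sum>j<L. expect L n \<pi> (tau i j)) = (\<Sum>j<L. \<Sum>w\<in>Om. \<pi> w * tau i j w)"
      unfolding expect_def ..
    also have "\<dots> = (\<Sum>w\<in>Om. \<Sum>j<L. \<pi> w * tau i j w)" by (rule sum.swap)
    also have "\<dots> = (\<Sum>w\<in>Om. \<pi> w * (\<Sum>j<L. tau i j w))" by (simp add: sum_distrib_left)
    also have "\<dots> = (\<Sum>w\<in>Om. \<pi> w)" using sum_tau i by simp
    also have "\<dots> = 1" using st unfolding stat_def by simp
    finally have "(\<Sum>j<L. expect L n \<pi> (tau i j)) = 1" .
    moreover have "(\<Sum>j<L. expect L n \<pi> (tau i j)) = (\<Sum>j<L. expect L n \<pi> (tau i 0))"
      by (rule sum.cong[OF refl], rule t0, simp)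
    moreover have "(\<Sum>j<L. expect L n \<pi> (tau i 0)) = real L * expect L n \<pi> (tau i 0)"
      by simp
    ultimately have "real L * expect L n \<pi> (tau i 0) = 1" by simp
    then show "expect L n \<pi> (tau i 0) = 1 / real L" using L0 by (simp add: field_simps)
  qed
  show ?thesis
  proof (intro conjI allI impI)
    fix i j assume "i < n" "j < L"
    then show "expect L n \<pi> (tau i j) = 1 / real L" using t0[of j i] tt[of i] by simp
  next
    fix i j j' assume "i < n" "j < L" "j' < L" "j < j'"
    then show "expect L n \<pi> (eta i j) = expect L n \<pi> (eta i j')" using e0[of j i] e0[of j' i] by simp
  qed
qed

end

lemma rotate_inj: "rotate s w = rotate s w' \<Longrightarrow> w = w'"
proof (induction s)
  case 0 then show ?case by simp
next
  case (Suc s)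
  then have "rotate1 (rotate s w) = rotate1 (rotate s w')" by simp
  then have "rotate s w = rotate s w'" using inj_rotate1 by (auto dest: injD)
  then show ?case using Suc by blast
qed

context chn
begin

lemma L2: "2 \<le> L" using n1 nL by simp

lemma step_rotate: "step w w' \<Longrightarrow> step (rotate s w) (rotate s w')"
  unfolding step_def
  using omega_rotate rate_rot[of w L w' n p q s] omega_len L0 rotate_inj by metis

lemma reach_rotate: "step\<^sup>*\<^sup>* w w' \<Longrightarrow> step\<^sup>*\<^sup>* (rotate s w) (rotate s w')"
proof (induction rule: rtranclp_induct)
  case base then show ?case by simp
next
  case (step y z) then show ?case using step_rotate by (meson rtranclp.rtrancl_into_rtrancl)
qed

lemma step_ctx:
  assumes "step (X @ B @ A) (X' @ B @ A)" "length X = length X'"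
  shows "step (A @ X @ B) (A @ X' @ B)"
proof -
  have "rotate (length (X @ B)) ((X @ B) @ A) = A @ X @ B" by (rule rotate_append)
  moreover have "rotate (length (X @ B)) ((X' @ B) @ A) = A @ X' @ B"
    using rotate_append[of "X' @ B" A] assms(2) by simp
  ultimately show ?thesis using step_rotate[OF assms(1), of "length (X @ B)"] by simp
qed

lemma rate_pos_at:
  assumes w: "w \<in> Om" and j: "j < L" and "p k \<le> rate_at L n p q w w' j" and k: "k < n"
  shows "0 < r w w'"
proof -
  have "0 < p k" using pp k by auto
  then show ?thesis using rate_ge_at[OF w pp qp j, of w'] assms(3) by linarith
qed

lemma rate_at_first:
  assumes w: "w \<in> Om" and j: "j < L" and wj: "w ! j = P k" and wj1: "w ! ((j + 1) mod L) = H i"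
  shows "(if i \<noteq> k then (if swap_at w j ((j + 1) mod L) = w' then p k else 0)
          else (if t2_res L n w j k = w' then p k else 0)) \<le> rate_at L n p q w w' j"
proof -
  have k: "k < n" using label_in_omega[OF w j] wj by (simp add: label_ok_def)
  have q0: "0 < q k" using qp k by auto
  have nn: "0 \<le> (case w ! ((j + L - 1) mod L) of P _ \<Rightarrow> 0
         | H i \<Rightarrow> if i \<noteq> k
                  then (if swap_at w j ((j + L - 1) mod L) = w' then q k else 0)
                  else (if t4_res L n w j k = w' then q k else 0))"
    using q0 by (auto split: letter.split)
  show ?thesis unfolding rate_at_def wj wj1 letter.case using nn by linarith
qed

lemma local1:
  assumes w: "P k # H i # D \<in> Om" and w': "H i # P k # D \<in> Om" and ik: "i \<noteq> k"
  shows "step (P k # H i # D) (H i # P k # D)"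
proof -
  let ?w = "P k # H i # D"
  have k: "k < n" using label_in_omega[OF w, of 0] L0 by (simp add: label_ok_def)
  have m1: "(0 + 1) mod L = 1" using L2 by simp
  have sw: "swap_at ?w 0 1 = H i # P k # D" by (simp add: swap_at_def)
  have "p k \<le> rate_at L n p q ?w (H i # P k # D) 0"
    using rate_at_first[OF w L0, of k i "H i # P k # D"] m1 sw ik by simp
  then have "0 < r ?w (H i # P k # D)" using rate_pos_at[OF w L0 _ k] by blast
  then show ?thesis unfolding step_def using w w' by auto
qed

lemma nth_L2w:
  assumes "m < length (P a # map H C @ P k # H k # D)"
  shows "(P a # map H C @ P k # H k # D) ! m =
    (if m = 0 then P a else if m \<le> length C then H (C ! (m - 1))
     else if m = Suc (length C) then P k else if m = Suc (Suc (length C)) then H k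
     else D ! (m - length C - 3))"
  using assms by (cases m) (auto simp: nth_append nth_Cons' numeral_3_eq_3)

lemma nth_L2w':
  assumes "m < length (P a # H b # map H C @ P k # D)"
  shows "(P a # H b # map H C @ P k # D) ! m =
    (if m = 0 then P a else if m = 1 then H b else if m \<le> Suc (length C) then H (C ! (m - 2))
     else if m = Suc (Suc (length C)) then P k
     else D ! (m - length C - 3))"
  using assms by (cases m) (auto simp: nth_append nth_Cons' numeral_3_eq_3 numeral_2_eq_2 split: nat.split)

lemma local2:
  assumes w: "P a # map H C @ P k # H k # D \<in> Om"
    and w': "P a # H ((k + n - 1) mod n) # map H C @ P k # D \<in> Om"
  shows "step (P a # map H C @ P k # H k # D) (P a # H ((k + n - 1) mod n) # map H C @ P k # D)"
proof -
  define w where "w = P a # map H C @ P k # H k # D"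
  define w2 where "w2 = P a # H ((k + n - 1) mod n) # map H C @ P k # D"
  define j where "j = Suc (length C)"
  have lw: "length w = L" using omega_len w unfolding w_def by blast
  have lw2: "length w2 = L" using omega_len w' unfolding w2_def by blast
  have jL: "Suc j < L" using lw unfolding w_def j_def by simp
  have wj: "w ! j = P k" unfolding w_def j_def by (simp add: nth_append)
  have wj1: "w ! ((j + 1) mod L) = H k" using jL unfolding w_def j_def by (simp add: nth_append)
  have k: "k < n" using label_in_omega[OF w, of j] jL wj unfolding w_def by (simp add: label_ok_def)
  have db: "dback L w j = j"
    unfolding dback_def
  proof (rule Least_equality)
    show "0 < j \<and> is_P (w ! ((j + L - j) mod L))" unfolding j_def w_def by (simp add: is_P_def)
    fix e assume e: "0 < e \<and> is_P (w ! ((j + L - e) mod L))"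
    show "j \<le> e"
    proof (rule ccontr)
      assume "\<not> j \<le> e"
      then have ej: "e < j" by simp
      then have "(j + L - e) mod L = j - e" using jL by (simp add: mod_if)
      moreover have "w ! (j - e) = H (C ! (j - e - 1))"
        using nth_L2w[of "j - e" a C k D] ej e lw jL unfolding w_def j_def by auto
      ultimately show False using e by (simp add: is_P_def)
    qed
  qed
  have t2: "t2_res L n w j k = w2"
  proof (rule nth_equalityI)
    show "length (t2_res L n w j k) = length w2" using lw2 by (simp add: t2_res_def Let_def)
    fix m assume "m < length (t2_res L n w j k)"
    then have m: "m < L" by (simp add: t2_res_def Let_def)
    have c1: "(j + 1) mod L = Suc j" using jL by simp
    have c2: "(j + 1 + L - j) mod L = 1" using L2 by (simp add: mod_Suc)
    have c3: "(\<exists>t\<in>{1..<j}. m = (j + 1 + L - j + t) mod L) = (2 \<le> m \<and> m \<le> j)"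
    proof
      assume "\<exists>t\<in>{1..<j}. m = (j + 1 + L - j + t) mod L"
      then obtain t where t: "1 \<le> t" "t < j" "m = (j + 1 + L - j + t) mod L" by auto
      have eq: "j + 1 + L - j + t = L + (1 + t)" by simp
      have "m = (1 + t) mod L" using t(3) unfolding eq mod_add_self1 .
      moreover have "1 + t < L" using t jL by simp
      ultimately have "m = 1 + t" by simp
      then show "2 \<le> m \<and> m \<le> j" using t by simp
    next
      assume mm: "2 \<le> m \<and> m \<le> j"
      have "j + 1 + L - j + (m - 1) = L + m" using mm by simp
      then have "m = (j + 1 + L - j + (m - 1)) mod L" using m by simp
      then show "\<exists>t\<in>{1..<j}. m = (j + 1 + L - j + t) mod L" using mm
        by (intro bexI[of _ "m - 1"]) auto
    qed
    have lhs: "t2_res L n w j k ! m = (if m = Suc j then P k else if m = 1 then H ((k + n - 1) mod n)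
       else if 2 \<le> m \<and> m \<le> j then w ! ((m + L - 1) mod L) else w ! m)"
    proof -
      have c3n: "(\<exists>t\<in>{Suc 0..<j}. m = Suc (L + t) mod L) = (2 \<le> m \<and> m \<le> j)"
        using c3 by simp
      show ?thesis using m unfolding t2_res_def Let_def db c1 c2 by (simp add: c3n)
    qed
    show "t2_res L n w j k ! m = w2 ! m"
    proof -
      have A: "w ! ((m + L - 1) mod L) = w ! (m - 1)" if "1 \<le> m" using that m by (simp add: mod_if)
      show ?thesis unfolding lhs
        using nth_L2w[of m a C k D] nth_L2w[of "m - 1" a C k D] nth_L2w'[of m a "(k + n - 1) mod n" C k D]
          m lw lw2 A unfolding w_def w2_def j_def
        by (auto simp: numeral_2_eq_2)
    qed
  qed
  have "p k \<le> rate_at L n p q w w2 j"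
    using rate_at_first[OF w[folded w_def] _ wj wj1, of w2] jL t2 by simp
  moreover have jL': "j < L" using jL by simp
  ultimately have "0 < r w w2" using rate_pos_at[OF w[folded w_def] jL' _ k] by blast
  moreover have "w \<noteq> w2"
  proof
    assume "w = w2"
    then have "w ! Suc j = w2 ! Suc j" by simp
    then show False unfolding w_def w2_def j_def by (simp add: nth_append)
  qed
  ultimately show ?thesis unfolding step_def using w w' w_def w2_def by auto
qed

end

definition mk :: "nat \<Rightarrow> nat list list \<Rightarrow> letter list" where
  "mk N gs = concat (map (\<lambda>k. P k # map H (gs ! k)) [0..<N])"

definition valid :: "nat \<Rightarrow> nat \<Rightarrow> nat list list \<Rightarrow> bool" where
  "valid L n gs \<longleftrightarrow> length gs = n \<and> (\<forall>k<n. \<forall>x\<in>set (gs ! k). x < n) \<and> length (mk n gs) = L"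

lemma mk_0[simp]: "mk 0 gs = []" by (simp add: mk_def)

lemma mk_Suc: "mk (Suc N) gs = mk N gs @ (P N # map H (gs ! N))"
  by (simp add: mk_def)

lemma length_mk: "length (mk N gs) = N + (\<Sum>k<N. length (gs ! k))"
  by (induction N) (simp_all add: mk_Suc)

lemma count_map_H[simp]: "count_list (map H g) (P k) = 0"
  by (auto simp: count_list_0_iff)

lemma count_mk: "count_list (mk N gs) (P k) = (if k < N then 1 else 0)"
proof (induction N)
  case 0 then show ?case by simp
next
  case (Suc N)
  show ?case using Suc by (simp add: mk_Suc)
qed

lemma pl_H: "[k. P k \<leftarrow> map H g] = []"
  by (induction g) auto

lemma pl_mk: "[k. P k \<leftarrow> mk N gs] = [0..<N]"
proof (induction N)
  case 0 then show ?case by simp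
next
  case (Suc N)
  have "[k. P k \<leftarrow> mk (Suc N) gs] = [k. P k \<leftarrow> mk N gs] @ [k. P k \<leftarrow> P N # map H (gs ! N)]"
    unfolding mk_Suc by (rule pl_append)
  also have "[k. P k \<leftarrow> P N # map H (gs ! N)] = [N]" using pl_H[of "gs ! N"] by simp
  finally show ?case using Suc by simp
qed

lemma set_mk: "x \<in> set (mk N gs) \<longleftrightarrow> (\<exists>k<N. x = P k \<or> (\<exists>i\<in>set (gs ! k). x = H i))"
  unfolding mk_def by auto

lemma mk_cong: "(\<And>k. k < N \<Longrightarrow> gs ! k = gs' ! k) \<Longrightarrow> mk N gs = mk N gs'"
  unfolding mk_def by (rule arg_cong[where f = concat], rule map_cong) auto

lemma mk_omega:
  assumes "valid L n gs" shows "mk n gs \<in> omega L n"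
proof -
  have lab: "\<forall>x\<in>set (mk n gs). label_ok n x"
    using assms unfolding valid_def by (auto simp: set_mk label_ok_def)
  show ?thesis unfolding omega_def
    using assms lab count_mk pl_mk unfolding valid_def
    by (auto intro: exI[of _ 0])
qed

lemma pl_nonP: "(\<forall>y\<in>set T. \<not> is_P y) \<Longrightarrow> [k. P k \<leftarrow> T] = []"
proof (induction T)
  case Nil then show ?case by simp
next
  case (Cons a T) then show ?case by (cases a) (auto simp: is_P_def)
qed

definition unH :: "letter \<Rightarrow> nat" where "unH x = (case x of H i \<Rightarrow> i | P _ \<Rightarrow> 0)"

lemma map_unH: "(\<forall>y\<in>set T. \<not> is_P y) \<Longrightarrow> map H (map unH T) = T"
proof (induction T)
  case Nil then show ?case by simp
next
  case (Cons a T) then show ?case by (cases a) (auto simp: is_P_def unH_def)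
qed

lemma decomp:
  "[k. P k \<leftarrow> v] = ks \<Longrightarrow> (v = [] \<or> is_P (hd v)) \<Longrightarrow>
   \<exists>gs. length gs = length ks \<and> v = concat (map (\<lambda>(k, g). P k # map H g) (zip ks gs))"
proof (induction ks arbitrary: v)
  case Nil
  show ?case
  proof (cases v)
    case Nil then show ?thesis by simp
  next
    case (Cons x v')
    then have "is_P x" using Nil.prems by simp
    then obtain a where "x = P a" by (cases x) (auto simp: is_P_def)
    then show ?thesis using Nil.prems Cons by simp
  qed
next
  case (Cons k ks)
  obtain x v' where v: "v = x # v'" using Cons.prems by (cases v) auto
  have "is_P x" using Cons.prems v by simp
  then obtain a where x: "x = P a" by (cases x) (auto simp: is_P_def)
  have a: "a = k" and pv': "[k. P k \<leftarrow> v'] = ks" using Cons.prems v x by auto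
  define T where "T = takeWhile (\<lambda>y. \<not> is_P y) v'"
  define D where "D = dropWhile (\<lambda>y. \<not> is_P y) v'"
  have v'TD: "v' = T @ D" unfolding T_def D_def by simp
  have Tn: "\<forall>y\<in>set T. \<not> is_P y" unfolding T_def by (auto dest: set_takeWhileD)
  have "[k. P k \<leftarrow> D] = ks" using pv' pl_nonP[OF Tn] v'TD by (simp only: pl_append) simp
  moreover have "D = [] \<or> is_P (hd D)"
    unfolding D_def using hd_dropWhile[of "\<lambda>y. \<not> is_P y" v'] by auto
  ultimately obtain gs where gs: "length gs = length ks"
    "D = concat (map (\<lambda>(k, g). P k # map H g) (zip ks gs))" using Cons.IH by blast
  have "v = P k # map H (map unH T) @ D" using v x a v'TD map_unH[OF Tn] by simp
  then have "v = concat (map (\<lambda>(k, g). P k # map H g) (zip (k # ks) (map unH T # gs)))"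
    using gs by simp
  moreover have "length (map unH T # gs) = length (k # ks)" using gs by simp
  ultimately show ?case by blast
qed

lemma zip_upt_conv: "length gs = N \<Longrightarrow> zip [0..<N] gs = map (\<lambda>k. (k, gs ! k)) [0..<N]"
  by (rule nth_equalityI) auto

lemma omega_mk:
  assumes w: "w \<in> omega L n" and n1: "1 \<le> n" and nL: "n < L"
  shows "\<exists>s gs. valid L n gs \<and> w = rotate s (mk n gs)"
proof -
  have lw: "length w = L" using omega_len[OF w] .
  have "count_list w (P 0) = 1" using w n1 unfolding omega_def by auto
  then have "P 0 \<in> set w" using count_list_0_iff[of w "P 0"] by auto
  then obtain a where a: "a < L" "w ! a = P 0" using lw by (auto simp: in_set_conv_nth)
  define w0 where "w0 = rotate a w"
  have w0O: "w0 \<in> omega L n" unfolding w0_def using omega_rotate[OF w] .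
  have lw0: "length w0 = L" using omega_len[OF w0O] .
  have w00: "w0 ! 0 = P 0" unfolding w0_def using nth_rotate[of 0 w a] a lw by simp
  have ww0: "w = rotate (L - a) w0"
  proof -
    have "rotate (L - a) w0 = rotate (L - a + a) w" unfolding w0_def by (simp add: rotate_rotate)
    also have "L - a + a = L" using a by simp
    finally show ?thesis using lw by simp
  qed
  obtain r where r: "[k. P k \<leftarrow> w0] = rotate r [0..<n]" using w0O unfolding omega_def by blast
  obtain t where w0t: "w0 = P 0 # t" using w00 lw0 nL by (cases w0) auto
  have "[k. P k \<leftarrow> w0] = 0 # [k. P k \<leftarrow> t]" using w0t by simp
  then have e: "rotate r [0..<n] = 0 # [k. P k \<leftarrow> t]" using r by simp
  have "hd (rotate r [0..<n]) = 0" unfolding e by simp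
  moreover have "hd (rotate r [0..<n]) = [0..<n] ! (r mod n)"
    using hd_rotate_conv_nth[of "[0..<n]" r] n1 by simp
  ultimately have "r mod n = 0" using n1 by simp
  then have pw0: "[k. P k \<leftarrow> w0] = [0..<n]" using r by simp
  have "w0 = [] \<or> is_P (hd w0)" using w0t by (simp add: is_P_def)
  then obtain gs where gs: "length gs = n" "w0 = concat (map (\<lambda>(k, g). P k # map H g) (zip [0..<n] gs))"
    using decomp[OF pw0] by auto
  have w0mk: "w0 = mk n gs" using gs unfolding mk_def zip_upt_conv[OF gs(1)] by (simp add: comp_def)
  have "valid L n gs"
    unfolding valid_def
  proof (intro conjI allI impI ballI)
    show "length gs = n" by fact
    show "length (mk n gs) = L" using w0mk lw0 by simp
    fix k x assume k: "k < n" and x: "x \<in> set (gs ! k)"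
    have "H x \<in> set w0" unfolding w0mk set_mk using k x by blast
    then have "label_ok n (H x)" using w0O unfolding omega_def by blast
    then show "x < n" by (simp add: label_ok_def)
  qed
  then show ?thesis using ww0 w0mk by blast
qed


definition tlb :: "nat \<Rightarrow> nat list list \<Rightarrow> nat \<Rightarrow> letter list" where
  "tlb N gs a = concat (map (\<lambda>k. P k # map H (gs ! k)) [a..<N])"

lemma mk_split: "k < N \<Longrightarrow> mk N gs = mk k gs @ (P k # map H (gs ! k)) @ tlb N gs (Suc k)"
proof -
  assume k: "k < N"
  have "[0..<N] = [0..<k] @ [k..<N]" using k by (metis le_add_diff_inverse less_imp_le_nat upt_add_eq_append zero_le)
  also have "[k..<N] = k # [Suc k..<N]" using k by (simp add: upt_conv_Cons)
  finally show ?thesis unfolding mk_def tlb_def by simp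
qed

lemma tlb_cong: "(\<And>k. a \<le> k \<Longrightarrow> k < N \<Longrightarrow> gs ! k = gs' ! k) \<Longrightarrow> tlb N gs a = tlb N gs' a"
  unfolding tlb_def by (rule arg_cong[where f = concat], rule map_cong) auto

lemma rot_last: "length T = L - 1 \<Longrightarrow> 0 < L \<Longrightarrow> rotate (L - 1) (T @ [x]) = x # T"
  using rotate_append[of T "[x]"] by simp

context chn
begin

lemma step_ctx2:
  assumes o1: "A @ Xs @ B \<in> Om" and o2: "A @ Xs' @ B \<in> Om" and len: "length Xs = length Xs'"
    and loc: "Xs @ B @ A \<in> Om \<Longrightarrow> Xs' @ B @ A \<in> Om \<Longrightarrow> step (Xs @ B @ A) (Xs' @ B @ A)"
  shows "step (A @ Xs @ B) (A @ Xs' @ B)"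
proof -
  have "rotate (length A) (A @ Xs @ B) = Xs @ B @ A" using rotate_append[of A "Xs @ B"] by simp
  then have a: "Xs @ B @ A \<in> Om" using omega_rotate[OF o1, of "length A"] by simp
  have "rotate (length A) (A @ Xs' @ B) = Xs' @ B @ A" using rotate_append[of A "Xs' @ B"] by simp
  then have b: "Xs' @ B @ A \<in> Om" using omega_rotate[OF o2, of "length A"] by simp
  show ?thesis using step_ctx[OF loc[OF a b] len] .
qed

lemma valid_len: "valid L n gs \<Longrightarrow> length (mk n gs) = L" unfolding valid_def by simp

lemma gap_step:
  assumes v: "valid L n gs" and k1: "1 \<le> k" and kn: "k < n" and gk: "gs ! k = i # rest"
  defines "gs' \<equiv> gs[k := rest, k - 1 := (if i = k then (k - 1) # gs ! (k - 1) else gs ! (k - 1) @ [i])]"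
  shows "valid L n gs' \<and> step (mk n gs) (mk n gs')"
proof -
  define X where "X = gs ! (k - 1)"
  define U where "U = mk (k - 1) gs"
  define V where "V = tlb n gs (Suc k)"
  have lg: "length gs = n" using v unfolding valid_def by simp
  have g'k: "gs' ! k = rest" using lg kn k1 unfolding gs'_def by simp
  have g'k1: "gs' ! (k - 1) = (if i = k then (k - 1) # X else X @ [i])"
    using lg kn unfolding gs'_def X_def by simp
  have g'o: "\<And>j. j \<noteq> k \<Longrightarrow> j \<noteq> k - 1 \<Longrightarrow> gs' ! j = gs ! j" unfolding gs'_def by simp
  have lg': "length gs' = n" using lg unfolding gs'_def by simp
  have mkk: "mk k gs = U @ (P (k - 1) # map H X)"
    using mk_Suc[of "k - 1" gs] k1 unfolding U_def X_def by simp
  have e1: "mk n gs = U @ (P (k - 1) # map H X) @ (P k # H i # map H rest) @ V"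
    using mk_split[OF kn, of gs] mkk gk unfolding V_def by simp
  have U': "mk (k - 1) gs' = U" unfolding U_def by (rule mk_cong) (use g'o in auto)
  have V': "tlb n gs' (Suc k) = V" unfolding V_def by (rule tlb_cong) (use g'o in auto)
  have mkk': "mk k gs' = U @ (P (k - 1) # map H (gs' ! (k - 1)))"
    using mk_Suc[of "k - 1" gs'] k1 U' by simp
  have e2: "mk n gs' = U @ (P (k - 1) # map H (gs' ! (k - 1))) @ (P k # map H rest) @ V"
    using mk_split[OF kn, of gs'] mkk' g'k V' by simp
  have lab: "\<forall>j<n. \<forall>x\<in>set (gs ! j). x < n" using v unfolding valid_def by simp
  have ik: "i < n" using lab kn gk by auto
  have v': "valid L n gs'"
    unfolding valid_def
  proof (intro conjI allI impI ballI)
    show "length gs' = n" by fact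
    show "length (mk n gs') = L" using e2 e1 valid_len[OF v] g'k1 by (auto split: if_splits)
    fix j x assume j: "j < n" and x: "x \<in> set (gs' ! j)"
    show "x < n"
    proof (cases "j = k")
      case True then show ?thesis using x g'k gk lab kn by auto
    next
      case False note jk = this
      show ?thesis
      proof (cases "j = k - 1")
        case True
        have "k - 1 < n" using kn by simp
        then have lX: "\<forall>x\<in>set X. x < n" using lab unfolding X_def by blast
        show ?thesis using True x g'k1 ik lX kn k1 by (auto split: if_splits)
      next
        case False then show ?thesis using x g'o jk lab j by auto
      qed
    qed
  qed
  have o1: "mk n gs \<in> Om" using mk_omega[OF v] .
  have o2: "mk n gs' \<in> Om" using mk_omega[OF v'] .
  have st: "step (mk n gs) (mk n gs')"
  proof (cases "i = k")
    case False
    have e2': "mk n gs' = (U @ P (k - 1) # map H X) @ [H i, P k] @ (map H rest @ V)"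
      using e2 g'k1 False by simp
    have e1': "mk n gs = (U @ P (k - 1) # map H X) @ [P k, H i] @ (map H rest @ V)"
      using e1 by simp
    show ?thesis unfolding e1' e2'
    proof (rule step_ctx2)
      show "(U @ P (k - 1) # map H X) @ [P k, H i] @ map H rest @ V \<in> Om" using o1 e1' by simp
      show "(U @ P (k - 1) # map H X) @ [H i, P k] @ map H rest @ V \<in> Om" using o2 e2' by simp
      show "length [P k, H i] = length [H i, P k]" by simp
      assume a: "[P k, H i] @ (map H rest @ V) @ U @ P (k - 1) # map H X \<in> Om"
        and b: "[H i, P k] @ (map H rest @ V) @ U @ P (k - 1) # map H X \<in> Om"
      show "step ([P k, H i] @ (map H rest @ V) @ U @ P (k - 1) # map H X)
                 ([H i, P k] @ (map H rest @ V) @ U @ P (k - 1) # map H X)"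
        using local1[of k i "(map H rest @ V) @ U @ P (k - 1) # map H X"] a b False by simp
    qed
  next
    case True
    have km: "(k + n - 1) mod n = k - 1" using k1 kn
      by (metis Nat.add_diff_assoc2 add.commute less_imp_diff_less mod_add_self1 mod_less)
    have e2': "mk n gs' = U @ (P (k - 1) # H (k - 1) # map H X @ [P k]) @ (map H rest @ V)"
      using e2 g'k1 True by simp
    have e1': "mk n gs = U @ (P (k - 1) # map H X @ [P k, H k]) @ (map H rest @ V)"
      using e1 True by simp
    show ?thesis unfolding e1' e2'
    proof (rule step_ctx2)
      show "U @ (P (k - 1) # map H X @ [P k, H k]) @ map H rest @ V \<in> Om" using o1 e1' by simp
      show "U @ (P (k - 1) # H (k - 1) # map H X @ [P k]) @ map H rest @ V \<in> Om" using o2 e2' by simp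
      show "length (P (k - 1) # map H X @ [P k, H k]) = length (P (k - 1) # H (k - 1) # map H X @ [P k])"
        by simp
      assume a: "(P (k - 1) # map H X @ [P k, H k]) @ (map H rest @ V) @ U \<in> Om"
        and b: "(P (k - 1) # H (k - 1) # map H X @ [P k]) @ (map H rest @ V) @ U \<in> Om"
      have a': "P (k - 1) # map H X @ P k # H k # (map H rest @ V @ U) \<in> Om" using a by simp
      have b': "P (k - 1) # H ((k + n - 1) mod n) # map H X @ P k # (map H rest @ V @ U) \<in> Om"
        using b km by simp
      show "step ((P (k - 1) # map H X @ [P k, H k]) @ (map H rest @ V) @ U)
                 ((P (k - 1) # H (k - 1) # map H X @ [P k]) @ (map H rest @ V) @ U)"
        using local2[OF a' b'] km by simp
    qed
  qed
  show ?thesis using v' st by blast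
qed


lemma gap_step0:
  assumes v: "valid L n gs" and n2: "2 \<le> n" and gk: "gs ! 0 = i # rest"
  defines "gs' \<equiv> gs[0 := rest, n - 1 := (if i = 0 then (n - 1) # gs ! (n - 1) else gs ! (n - 1) @ [i])]"
  shows "valid L n gs' \<and> step (mk n gs) (rotate (L - 1) (mk n gs'))"
proof -
  define Z where "Z = gs ! (n - 1)"
  define M where "M = tlb (n - 1) gs 1"
  have lg: "length gs = n" using v unfolding valid_def by simp
  have n0: "n - 1 \<noteq> 0" using n2 by simp
  have g'0: "gs' ! 0 = rest" using lg n2 n0 unfolding gs'_def by simp
  have g'n: "gs' ! (n - 1) = (if i = 0 then (n - 1) # Z else Z @ [i])"
    using lg n2 unfolding gs'_def Z_def by simp
  have g'o: "\<And>j. j \<noteq> 0 \<Longrightarrow> j \<noteq> n - 1 \<Longrightarrow> gs' ! j = gs ! j" unfolding gs'_def by simp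
  have lg': "length gs' = n" using lg unfolding gs'_def by simp
  have nS: "n = Suc (n - 1)" using n2 by simp
  have split: "\<And>g. mk n g = (P 0 # map H (g ! 0)) @ tlb (n - 1) g 1 @ (P (n - 1) # map H (g ! (n - 1)))"
  proof -
    fix g
    have "mk n g = mk (n - 1) g @ (P (n - 1) # map H (g ! (n - 1)))" using mk_Suc[of "n - 1" g] nS by simp
    moreover have "mk (n - 1) g = (P 0 # map H (g ! 0)) @ tlb (n - 1) g 1"
      using mk_split[of 0 "n - 1" g] n2 by simp
    ultimately show "mk n g = (P 0 # map H (g ! 0)) @ tlb (n - 1) g 1 @ (P (n - 1) # map H (g ! (n - 1)))"
      by simp
  qed
  have M': "tlb (n - 1) gs' 1 = M" unfolding M_def by (rule tlb_cong) (use g'o in auto)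
  have e1: "mk n gs = (P 0 # H i # map H rest) @ M @ (P (n - 1) # map H Z)"
    using split[of gs] gk unfolding M_def Z_def by simp
  have e2: "mk n gs' = (P 0 # map H rest) @ M @ (P (n - 1) # map H (gs' ! (n - 1)))"
    using split[of gs'] g'0 M' by simp
  have lab: "\<forall>j<n. \<forall>x\<in>set (gs ! j). x < n" using v unfolding valid_def by simp
  have "0 < n" using n2 by simp
  then have i0: "i < n" using lab gk by (metis list.set_intros(1))
  have "n - 1 < n" using n2 by simp
  then have lZ: "\<forall>x\<in>set Z. x < n" using lab unfolding Z_def by blast
  have v': "valid L n gs'"
    unfolding valid_def
  proof (intro conjI allI impI ballI)
    show "length gs' = n" by fact
    show "length (mk n gs') = L" using e2 e1 valid_len[OF v] g'n by (auto split: if_splits)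
    fix j x assume j: "j < n" and x: "x \<in> set (gs' ! j)"
    show "x < n"
    proof (cases "j = 0")
      case True
      have "\<forall>x\<in>set (gs ! 0). x < n" using lab \<open>0 < n\<close> by blast
      then show ?thesis using True x g'0 gk by auto
    next
      case False note j0 = this
      show ?thesis
      proof (cases "j = n - 1")
        case True then show ?thesis using x g'n i0 lZ by (auto split: if_splits)
      next
        case False then show ?thesis using x g'o j0 lab j by auto
      qed
    qed
  qed
  have o1: "mk n gs \<in> Om" using mk_omega[OF v] .
  have o2: "mk n gs' \<in> Om" using mk_omega[OF v'] .
  have lmk: "length (mk n gs) = L" using valid_len[OF v] .
  have lmk': "length (mk n gs') = L" using valid_len[OF v'] .
  have st: "step (mk n gs) (rotate (L - 1) (mk n gs'))"
  proof (cases "i = 0")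
    case False
    define T where "T = P 0 # map H rest @ M @ P (n - 1) # map H Z"
    have e2': "mk n gs' = T @ [H i]" using e2 g'n False unfolding T_def by simp
    have lT: "length T = L - 1" using lmk' e2' by simp
    have r: "rotate (L - 1) (mk n gs') = H i # P 0 # (map H rest @ M @ P (n - 1) # map H Z)"
      unfolding e2' using rot_last[OF lT L0] unfolding T_def by simp
    have o2': "H i # P 0 # (map H rest @ M @ P (n - 1) # map H Z) \<in> Om"
      using omega_rotate[OF o2, of "L - 1"] r by simp
    have o1': "P 0 # H i # (map H rest @ M @ P (n - 1) # map H Z) \<in> Om" using o1 e1 by simp
    show ?thesis unfolding r using local1[OF o1' o2'] False e1 by simp
  next
    case True
    define Y where "Y = P (n - 1) # map H Z"
    define X where "X = P 0 # H 0 # map H rest @ M"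
    define Y2 where "Y2 = P (n - 1) # H (n - 1) # map H Z"
    define X' where "X' = P 0 # map H rest @ M"
    have e1': "mk n gs = X @ Y" using e1 True unfolding X_def Y_def by simp
    have e2': "mk n gs' = X' @ Y2" using e2 g'n True unfolding X'_def Y2_def by simp
    have nm: "(0 + n - 1) mod n = n - 1" using n2 by simp
    have a: "Y @ X \<in> Om"
      using omega_rotate[OF o1, of "length X"] rotate_append[of X Y] e1' by simp
    have b: "Y2 @ X' \<in> Om"
      using omega_rotate[OF o2, of "length X'"] rotate_append[of X' Y2] e2' by simp
    have a': "P (n - 1) # map H Z @ P 0 # H 0 # (map H rest @ M) \<in> Om" using a unfolding Y_def X_def by simp
    have b': "P (n - 1) # H ((0 + n - 1) mod n) # map H Z @ P 0 # (map H rest @ M) \<in> Om"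
      using b nm unfolding Y2_def X'_def by simp
    have s0: "step (Y @ X) (Y2 @ X')"
      using local2[OF a' b'] nm unfolding Y_def X_def Y2_def X'_def by simp
    have s1: "step (rotate (length Y) (Y @ X)) (rotate (length Y) (Y2 @ X'))"
      using step_rotate[OF s0] .
    have r1: "rotate (length Y) (Y @ X) = mk n gs" using rotate_append[of Y X] e1' by simp
    have lYX: "length (Y2 @ X') = L" using lmk' e2' by simp
    have r2: "rotate (L - 1) (mk n gs') = rotate (length Y) (Y2 @ X')"
    proof -
      have "rotate (L - 1) (mk n gs') = rotate (L - 1) (rotate (length Y2) (Y2 @ X'))"
        using rotate_append[of Y2 X'] e2' by simp
      also have "\<dots> = rotate (L - 1 + length Y2) (Y2 @ X')" by (simp add: rotate_rotate)
      also have "L - 1 + length Y2 = L + length Y" unfolding Y2_def Y_def using L0 by simp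
      also have "rotate (L + length Y) (Y2 @ X') = rotate (length Y) (Y2 @ X')"
        by (metis lYX mod_add_self1 rotate_conv_mod)
      finally show ?thesis .
    qed
    show ?thesis using s1 r1 r2 by simp
  qed
  show ?thesis using v' st by blast
qed

lemma local3:
  assumes n1': "n = 1" and w: "P 0 # replicate (L - 1) (H 0) \<in> Om"
  shows "step (P 0 # replicate (L - 1) (H 0)) (rotate (L - 1) (P 0 # replicate (L - 1) (H 0)))"
proof -
  define w where "w = P 0 # replicate (L - 1) (H 0)"
  define w2 where "w2 = rotate (L - 1) w"
  have lw: "length w = L" unfolding w_def using L0 by simp
  have lw2: "length w2 = L" unfolding w2_def using lw by simp
  have wx: "\<And>x. 1 \<le> x \<Longrightarrow> x < L \<Longrightarrow> w ! x = H 0" unfolding w_def by (auto simp: nth_Cons')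
  have w2x: "\<And>x. x < L \<Longrightarrow> w2 ! x = (if x = 1 then P 0 else H 0)"
  proof -
    fix x assume x: "x < L"
    have "w2 ! x = w ! ((L - 1 + x) mod L)" unfolding w2_def using nth_rotate[of x w "L - 1"] lw x by simp
    moreover have "(L - 1 + x) mod L = (if x = 0 then L - 1 else x - 1)"
    proof (cases x)
      case 0 then show ?thesis using L0 by simp
    next
      case (Suc y)
      then have "L - 1 + x = L + y" using L0 by simp
      then show ?thesis using Suc x by simp
    qed
    ultimately show "w2 ! x = (if x = 1 then P 0 else H 0)"
      using wx x L2 unfolding w_def by (auto simp: nth_Cons')
  qed
  have w0: "w ! 0 = P 0" unfolding w_def by simp
  have w1: "w ! ((0 + 1) mod L) = H 0" using wx L2 by simp
  have db: "dback L w 0 = L"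
    unfolding dback_def
  proof (rule Least_equality)
    show "0 < L \<and> is_P (w ! ((0 + L - L) mod L))" using L0 w0 by (simp add: is_P_def)
    fix e assume e: "0 < e \<and> is_P (w ! ((0 + L - e) mod L))"
    show "L \<le> e"
    proof (rule ccontr)
      assume "\<not> L \<le> e"
      then have a: "(0 + L - e) mod L = L - e" "1 \<le> L - e" "L - e < L" using e by auto
      then have "w ! ((0 + L - e) mod L) = H 0" using wx by simp
      then show False using e by (simp add: is_P_def)
    qed
  qed
  have t2: "t2_res L n w 0 0 = w2"
  proof (rule nth_equalityI)
    show "length (t2_res L n w 0 0) = length w2" using lw2 by (simp add: t2_res_def Let_def)
    fix m assume "m < length (t2_res L n w 0 0)"
    then have m: "m < L" by (simp add: t2_res_def Let_def)
    have c1: "(0 + 1) mod L = 1" using L2 by simp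
    have c2: "(0 + 1 + L - L) mod L = 1" using L2 by simp
    have c3: "m \<noteq> 1 \<Longrightarrow> (\<exists>t\<in>{1..<L}. m = (0 + 1 + L - L + t) mod L)"
    proof -
      assume m1: "m \<noteq> 1"
      show ?thesis
      proof (cases m)
        case 0
        then show ?thesis using L2 by (intro bexI[of _ "L - 1"]) auto
      next
        case (Suc y)
        then have "1 \<le> y" using m1 by simp
        then show ?thesis using Suc m by (intro bexI[of _ y]) auto
      qed
    qed
    have c4: "m \<noteq> 1 \<Longrightarrow> w ! ((m + L - 1) mod L) = H 0"
    proof -
      assume m1: "m \<noteq> 1"
      have "(m + L - 1) mod L = (if m = 0 then L - 1 else m - 1)"
      proof (cases m)
        case 0 then show ?thesis using L0 by simp
      next
        case (Suc y)
        then have "m + L - 1 = L + y" by simp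
        then show ?thesis using Suc m by simp
      qed
      then show ?thesis using wx m m1 L2 by auto
    qed
    show "t2_res L n w 0 0 ! m = w2 ! m"
    proof (cases "m = 1")
      case True
      then show ?thesis using m w2x unfolding t2_res_def Let_def c1 by simp
    next
      case False
      have "t2_res L n w 0 0 ! m = w ! ((m + L - 1) mod L)"
        using m False c3[OF False] unfolding t2_res_def Let_def db c1 c2 by simp
      then show ?thesis using c4[OF False] w2x m False by simp
    qed
  qed
  have "p 0 \<le> rate_at L n p q w w2 0"
    using rate_at_first[OF w[folded w_def] L0 w0 w1, of w2] t2 by simp
  then have "0 < r w w2" using rate_pos_at[OF w[folded w_def] L0 _] n1' by simp
  moreover have "w \<noteq> w2"
  proof
    assume "w = w2"
    then have "w ! 1 = w2 ! 1" by simp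
    then show False using wx w2x L2 by simp
  qed
  moreover have "w2 \<in> Om" unfolding w2_def using omega_rotate[OF w[folded w_def]] .
  ultimately show ?thesis unfolding step_def using w w_def w2_def by auto
qed

end

context chn
begin

lemma phase:
  assumes k1: "1 \<le> k" and kn: "k < n"
  shows "valid L n gs \<Longrightarrow> \<exists>X'. step\<^sup>*\<^sup>* (mk n gs) (mk n (gs[k := [], k - 1 := X']))
      \<and> valid L n (gs[k := [], k - 1 := X'])
      \<and> set X' \<subseteq> set (gs ! (k - 1)) \<union> (set (gs ! k) - {k}) \<union> {k - 1}"
proof (induction "length (gs ! k)" arbitrary: gs)
  case 0
  then have gk: "gs ! k = []" by simp
  have lg: "length gs = n" using 0 unfolding valid_def by simp
  have "gs[k := [], k - 1 := gs ! (k - 1)] = gs" using gk by (metis list_update_id)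
  then show ?case using 0 by (intro exI[of _ "gs ! (k - 1)"]) auto
next
  case (Suc m)
  obtain i rest where gk: "gs ! k = i # rest" using Suc.hyps(2) by (cases "gs ! k") auto
  define Y where "Y = (if i = k then (k - 1) # gs ! (k - 1) else gs ! (k - 1) @ [i])"
  define gs1 where "gs1 = gs[k := rest, k - 1 := Y]"
  have lg: "length gs = n" using Suc.prems unfolding valid_def by simp
  have s1: "valid L n gs1 \<and> step (mk n gs) (mk n gs1)"
    using gap_step[OF Suc.prems k1 kn gk] unfolding gs1_def Y_def by simp
  have g1k: "gs1 ! k = rest" using lg kn k1 unfolding gs1_def by simp
  have g1k1: "gs1 ! (k - 1) = Y" using lg kn unfolding gs1_def by simp
  have "m = length (gs1 ! k)" using g1k gk Suc.hyps(2) by simp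
  then obtain X'' where X'': "step\<^sup>*\<^sup>* (mk n gs1) (mk n (gs1[k := [], k - 1 := X'']))"
    "valid L n (gs1[k := [], k - 1 := X''])"
    "set X'' \<subseteq> set (gs1 ! (k - 1)) \<union> (set (gs1 ! k) - {k}) \<union> {k - 1}"
    using Suc.hyps(1) s1 by blast
  have kk: "k \<noteq> k - 1" using k1 by simp
  have upd: "gs1[k := [], k - 1 := X''] = gs[k := [], k - 1 := X'']"
    unfolding gs1_def using kk by (metis list_update_overwrite list_update_swap)
  have "set X'' \<subseteq> set (gs ! (k - 1)) \<union> (set (gs ! k) - {k}) \<union> {k - 1}"
    using X''(3) g1k g1k1 gk unfolding Y_def by (auto split: if_splits)
  moreover have "step\<^sup>*\<^sup>* (mk n gs) (mk n (gs[k := [], k - 1 := X'']))"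
    using X''(1) s1 upd by (metis converse_rtranclp_into_rtranclp)
  ultimately show ?case using X''(2) upd by metis
qed

lemma phase0:
  assumes n2: "2 \<le> n"
  shows "valid L n gs \<Longrightarrow> \<exists>X' s. step\<^sup>*\<^sup>* (mk n gs) (rotate s (mk n (gs[0 := [], n - 1 := X'])))
      \<and> valid L n (gs[0 := [], n - 1 := X'])
      \<and> set X' \<subseteq> set (gs ! (n - 1)) \<union> (set (gs ! 0) - {0}) \<union> {n - 1}"
proof (induction "length (gs ! 0)" arbitrary: gs)
  case 0
  then have gk: "gs ! 0 = []" by simp
  have lg: "length gs = n" using 0 unfolding valid_def by simp
  have "gs[0 := [], n - 1 := gs ! (n - 1)] = gs" using gk by (metis list_update_id)
  then show ?case using 0 by (intro exI[of _ "gs ! (n - 1)"] exI[of _ 0]) auto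
next
  case (Suc m)
  obtain i rest where gk: "gs ! 0 = i # rest" using Suc.hyps(2) by (cases "gs ! 0") auto
  define Y where "Y = (if i = 0 then (n - 1) # gs ! (n - 1) else gs ! (n - 1) @ [i])"
  define gs1 where "gs1 = gs[0 := rest, n - 1 := Y]"
  have lg: "length gs = n" using Suc.prems unfolding valid_def by simp
  have kk: "0 \<noteq> n - 1" using n2 by simp
  have s1: "valid L n gs1 \<and> step (mk n gs) (rotate (L - 1) (mk n gs1))"
    using gap_step0[OF Suc.prems n2 gk] unfolding gs1_def Y_def by simp
  have g1k: "gs1 ! 0 = rest" using lg n2 kk unfolding gs1_def by simp
  have g1k1: "gs1 ! (n - 1) = Y" using lg n2 unfolding gs1_def by simp
  have "m = length (gs1 ! 0)" using g1k gk Suc.hyps(2) by simp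
  then obtain X'' s where X'': "step\<^sup>*\<^sup>* (mk n gs1) (rotate s (mk n (gs1[0 := [], n - 1 := X''])))"
    "valid L n (gs1[0 := [], n - 1 := X''])"
    "set X'' \<subseteq> set (gs1 ! (n - 1)) \<union> (set (gs1 ! 0) - {0}) \<union> {n - 1}"
    using Suc.hyps(1) s1 by blast
  have upd: "gs1[0 := [], n - 1 := X''] = gs[0 := [], n - 1 := X'']"
    unfolding gs1_def using kk by (metis list_update_overwrite list_update_swap)
  have "set X'' \<subseteq> set (gs ! (n - 1)) \<union> (set (gs ! 0) - {0}) \<union> {n - 1}"
    using X''(3) g1k g1k1 gk unfolding Y_def by (auto split: if_splits)
  moreover have "step\<^sup>*\<^sup>* (mk n gs) (rotate (L - 1 + s) (mk n (gs[0 := [], n - 1 := X''])))"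
  proof -
    have "step\<^sup>*\<^sup>* (rotate (L - 1) (mk n gs1)) (rotate (L - 1) (rotate s (mk n (gs1[0 := [], n - 1 := X'']))))"
      using reach_rotate[OF X''(1)] .
    then have "step\<^sup>*\<^sup>* (rotate (L - 1) (mk n gs1)) (rotate (L - 1 + s) (mk n (gs[0 := [], n - 1 := X''])))"
      using upd by (simp add: rotate_rotate)
    then show ?thesis using s1 by (metis converse_rtranclp_into_rtranclp)
  qed
  ultimately show ?case using X''(2) upd by metis
qed

lemma gather:
  assumes v: "valid L n gs"
  shows "d \<le> n - 1 \<Longrightarrow> \<exists>gs'. step\<^sup>*\<^sup>* (mk n gs) (mk n gs') \<and> valid L n gs'
           \<and> (\<forall>k. n - d \<le> k \<and> k < n \<longrightarrow> gs' ! k = [])"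
proof (induction d)
  case 0 then show ?case using v by (intro exI[of _ gs]) auto
next
  case (Suc d)
  then obtain gs' where gs': "step\<^sup>*\<^sup>* (mk n gs) (mk n gs')" "valid L n gs'"
    "\<forall>k. n - d \<le> k \<and> k < n \<longrightarrow> gs' ! k = []" by auto
  define k0 where "k0 = n - Suc d"
  have k01: "1 \<le> k0" and k0n: "k0 < n" using Suc.prems n1 unfolding k0_def by auto
  obtain X' where X': "step\<^sup>*\<^sup>* (mk n gs') (mk n (gs'[k0 := [], k0 - 1 := X']))"
    "valid L n (gs'[k0 := [], k0 - 1 := X'])"
    using phase[OF k01 k0n gs'(2)] by blast
  have lg: "length gs' = n" using gs'(2) unfolding valid_def by simp
  have "\<forall>k. n - Suc d \<le> k \<and> k < n \<longrightarrow> gs'[k0 := [], k0 - 1 := X'] ! k = []"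
  proof (intro allI impI)
    fix k assume k: "n - Suc d \<le> k \<and> k < n"
    show "gs'[k0 := [], k0 - 1 := X'] ! k = []"
    proof (cases "k = k0")
      case True then show ?thesis using lg k0n k01 by simp
    next
      case False
      then have "n - d \<le> k" using k Suc.prems unfolding k0_def by arith
      moreover have "k \<noteq> k0 - 1" using k False Suc.prems unfolding k0_def by arith
      ultimately show ?thesis using gs'(3) k False by simp
    qed
  qed
  then show ?case using X' gs'(1) by (meson rtranclp_trans)
qed

definition z :: "nat list list" where "z = replicate (L - n) 0 # replicate (n - 1) []"

lemma sum_first: "0 < N \<Longrightarrow> (\<Sum>k<N. f k) = f 0 + (\<Sum>k<N - 1. f (Suc k))"
  by (metis Suc_pred' sum.lessThan_Suc_shift)

lemma len_z: "length z = n" unfolding z_def using n1 by simp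

lemma z_nth: "k < n \<Longrightarrow> z ! k = (if k = 0 then replicate (L - n) 0 else [])"
  unfolding z_def by (cases k) auto

lemma valid_z: "valid L n z"
  unfolding valid_def
proof (intro conjI allI impI ballI)
  show "length z = n" by (rule len_z)
  fix k x assume "k < n" "x \<in> set (z ! k)"
  then show "x < n" using z_nth n1 by (auto split: if_splits)
next
  have "(\<Sum>k<n. length (z ! k)) = length (z ! 0) + (\<Sum>k<n - 1. length (z ! Suc k))"
    using sum_first[of n] n1 by simp
  also have "(\<Sum>k<n - 1. length (z ! Suc k)) = 0" using z_nth by simp
  finally show "length (mk n z) = L" unfolding length_mk using z_nth[of 0] n1 nL by simp
qed

lemma F0_z:
  assumes v: "valid L n gs" and F1: "\<forall>k. 0 < k \<and> k < n \<longrightarrow> gs ! k = []" and F2: "set (gs ! 0) \<subseteq> {0}"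
  shows "gs = z"
proof (rule nth_equalityI)
  have lg: "length gs = n" using v unfolding valid_def by simp
  then show "length gs = length z" using len_z by simp
  have "(\<Sum>k<n. length (gs ! k)) = length (gs ! 0) + (\<Sum>k<n - 1. length (gs ! Suc k))"
    using sum_first[of n] n1 by simp
  also have "(\<Sum>k<n - 1. length (gs ! Suc k)) = 0" using F1 by simp
  finally have "n + length (gs ! 0) = L" using v unfolding valid_def length_mk by simp
  then have "length (gs ! 0) = L - n" by simp
  moreover have "replicate (length (gs ! 0)) 0 = gs ! 0" using F2 by (intro replicate_length_same) auto
  ultimately have g0: "gs ! 0 = replicate (L - n) 0" by simp
  fix k assume "k < length gs"
  then have k: "k < n" using lg by simp
  show "gs ! k = z ! k" using z_nth[OF k] g0 F1 k by auto
qed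

lemma norm:
  "valid L n gs \<Longrightarrow> j < n \<Longrightarrow> (\<forall>k. 0 < k \<and> k < n \<and> k \<noteq> j \<longrightarrow> gs ! k = [])
    \<Longrightarrow> set (gs ! 0) \<subseteq> {0} \<Longrightarrow> set (gs ! j) \<subseteq> {..j} \<Longrightarrow> step\<^sup>*\<^sup>* (mk n gs) (mk n z)"
proof (induction j arbitrary: gs)
  case 0
  then have "gs = z" using F0_z by blast
  then show ?case by simp
next
  case (Suc j)
  have k1: "1 \<le> Suc j" by simp
  obtain X' where X': "step\<^sup>*\<^sup>* (mk n gs) (mk n (gs[Suc j := [], Suc j - 1 := X']))"
    "valid L n (gs[Suc j := [], Suc j - 1 := X'])"
    "set X' \<subseteq> set (gs ! (Suc j - 1)) \<union> (set (gs ! Suc j) - {Suc j}) \<union> {Suc j - 1}"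
    using phase[OF k1 Suc.prems(2) Suc.prems(1)] by blast
  define gs' where "gs' = gs[Suc j := [], j := X']"
  have lg: "length gs = n" using Suc.prems(1) unfolding valid_def by simp
  have jn: "j < n" using Suc.prems(2) by simp
  have sX: "set X' \<subseteq> {..j}"
  proof -
    have a: "set (gs ! j) \<subseteq> {..j}"
    proof (cases "j = 0")
      case True then show ?thesis using Suc.prems(4) by auto
    next
      case False then have "gs ! j = []" using Suc.prems(3) jn by auto
      then show ?thesis by simp
    qed
    have b: "set (gs ! Suc j) - {Suc j} \<subseteq> {..j}" using Suc.prems(5) by auto
    show ?thesis using X'(3) a b by auto
  qed
  have g'j: "gs' ! j = X'" unfolding gs'_def using lg jn by simp
  have g'o: "\<And>k. k \<noteq> j \<Longrightarrow> k \<noteq> Suc j \<Longrightarrow> gs' ! k = gs ! k" unfolding gs'_def by simp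
  have g'sj: "gs' ! Suc j = []" unfolding gs'_def using lg Suc.prems(2) by simp
  have F1: "\<forall>k. 0 < k \<and> k < n \<and> k \<noteq> j \<longrightarrow> gs' ! k = []"
  proof (intro allI impI)
    fix k assume k: "0 < k \<and> k < n \<and> k \<noteq> j"
    show "gs' ! k = []"
    proof (cases "k = Suc j")
      case True then show ?thesis using g'sj by simp
    next
      case False then show ?thesis using g'o k Suc.prems(3) by auto
    qed
  qed
  have F2: "set (gs' ! 0) \<subseteq> {0}"
  proof (cases "j = 0")
    case True then show ?thesis using g'j sX by auto
  next
    case False then show ?thesis using g'o Suc.prems(4) by auto
  qed
  have F3: "set (gs' ! j) \<subseteq> {..j}" using g'j sX by simp
  have "step\<^sup>*\<^sup>* (mk n gs') (mk n z)"
    using Suc.IH[OF _ jn F1 F2 F3] X'(2) unfolding gs'_def by simp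
  then show ?case using X'(1) unfolding gs'_def by (simp add: rtranclp_trans)
qed

lemma mk1_z: "n = 1 \<Longrightarrow> mk n z = P 0 # replicate (L - 1) (H 0)"
  unfolding mk_def z_def by (simp add: map_replicate)

lemma cyc: "step\<^sup>*\<^sup>* (mk n z) (rotate (L - 1) (mk n z))"
proof (cases "n = 1")
  case True
  have o: "P 0 # replicate (L - 1) (H 0) \<in> Om" using mk_omega[OF valid_z] mk1_z[OF True] by simp
  show ?thesis using local3[OF True o] mk1_z[OF True] by simp
next
  case False
  then have n2: "2 \<le> n" using n1 by simp
  have z0: "z ! 0 = 0 # replicate (L - n - 1) 0" using z_nth[of 0] n1 nL
    by (simp add: replicate_Suc[symmetric] del: replicate_Suc)
  define gs1 where "gs1 = z[0 := replicate (L - n - 1) 0, n - 1 := (if (0::nat) = 0 then (n - 1) # z ! (n - 1) else z ! (n - 1) @ [0])]"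
  have s: "valid L n gs1 \<and> step (mk n z) (rotate (L - 1) (mk n gs1))"
    using gap_step0[OF valid_z n2 z0] unfolding gs1_def by blast
  have nn: "n - 1 \<noteq> 0" "n - 1 < n" using n2 by auto
  have zn: "z ! (n - 1) = []" using z_nth[OF nn(2)] nn(1) by simp
  have g0: "gs1 ! 0 = replicate (L - n - 1) 0" unfolding gs1_def using len_z nn by simp
  have gn: "gs1 ! (n - 1) = [n - 1]" unfolding gs1_def using len_z nn zn by simp
  have go: "\<And>k. 0 < k \<Longrightarrow> k < n \<Longrightarrow> k \<noteq> n - 1 \<Longrightarrow> gs1 ! k = []"
    unfolding gs1_def using z_nth by simp
  have "step\<^sup>*\<^sup>* (mk n gs1) (mk n z)"
    by (rule norm[of gs1 "n - 1"]) (use s nn g0 gn go in auto)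
  then have "step\<^sup>*\<^sup>* (rotate (L - 1) (mk n gs1)) (rotate (L - 1) (mk n z))" by (rule reach_rotate)
  then show ?thesis using s by (metis converse_rtranclp_into_rtranclp)
qed

lemma cyc_all: "step\<^sup>*\<^sup>* (mk n z) (rotate ((L - 1) * t) (mk n z))"
proof (induction t)
  case 0 then show ?case by simp
next
  case (Suc t)
  have "step\<^sup>*\<^sup>* (rotate ((L - 1) * t) (mk n z)) (rotate ((L - 1) * t) (rotate (L - 1) (mk n z)))"
    using reach_rotate[OF cyc] .
  then have "step\<^sup>*\<^sup>* (rotate ((L - 1) * t) (mk n z)) (rotate ((L - 1) * Suc t) (mk n z))"
    by (simp add: rotate_rotate add.commute)
  then show ?case using Suc by (rule rtranclp_trans[rotated])
qed

lemma zback: "step\<^sup>*\<^sup>* (rotate a (mk n z)) (mk n z)"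
proof -
  have "step\<^sup>*\<^sup>* (rotate a (mk n z)) (rotate a (rotate ((L - 1) * a) (mk n z)))"
    using reach_rotate[OF cyc_all] .
  moreover have "a + (L - 1) * a = L * a" using L0 by (cases L) auto
  moreover have "length (mk n z) = L" using valid_len[OF valid_z] .
  ultimately show ?thesis by (simp add: rotate_rotate)
qed

lemma reach_all: "\<forall>w\<in>Om. step\<^sup>*\<^sup>* w (mk n z)"
proof
  fix w assume w: "w \<in> Om"
  obtain s gs where sg: "valid L n gs" "w = rotate s (mk n gs)" using omega_mk[OF w n1 nL] by blast
  show "step\<^sup>*\<^sup>* w (mk n z)"
  proof (cases "n = 1")
    case True
    have "gs = z"
    proof (rule F0_z[OF sg(1)])
      show "\<forall>k. 0 < k \<and> k < n \<longrightarrow> gs ! k = []" using True by simp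
      show "set (gs ! 0) \<subseteq> {0}" using sg(1) True unfolding valid_def by auto
    qed
    then show ?thesis using sg zback by simp
  next
    case False
    then have n2: "2 \<le> n" using n1 by simp
    obtain gs1 where g1: "step\<^sup>*\<^sup>* (mk n gs) (mk n gs1)" "valid L n gs1"
      "\<forall>k. n - (n - 1) \<le> k \<and> k < n \<longrightarrow> gs1 ! k = []"
      using gather[OF sg(1), of "n - 1"] by blast
    obtain X' s2 where g2: "step\<^sup>*\<^sup>* (mk n gs1) (rotate s2 (mk n (gs1[0 := [], n - 1 := X'])))"
      "valid L n (gs1[0 := [], n - 1 := X'])"
      using phase0[OF n2 g1(2)] by blast
    define gs2 where "gs2 = gs1[0 := [], n - 1 := X']"
    have lg: "length gs1 = n" using g1(2) unfolding valid_def by simp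
    have nn: "n - 1 \<noteq> 0" "n - 1 < n" using n2 by auto
    have "step\<^sup>*\<^sup>* (mk n gs2) (mk n z)"
    proof (rule norm[of gs2 "n - 1"])
      show "valid L n gs2" using g2(2) unfolding gs2_def .
      show "n - 1 < n" by fact
      show "\<forall>k. 0 < k \<and> k < n \<and> k \<noteq> n - 1 \<longrightarrow> gs2 ! k = []"
        using g1(3) unfolding gs2_def by auto
      show "set (gs2 ! 0) \<subseteq> {0}" unfolding gs2_def using lg nn by simp
      have "\<forall>x\<in>set (gs2 ! (n - 1)). x < n" using g2(2) nn unfolding gs2_def valid_def by blast
      then show "set (gs2 ! (n - 1)) \<subseteq> {..n - 1}" by auto
    qed
    then have "step\<^sup>*\<^sup>* (rotate s2 (mk n gs2)) (rotate s2 (mk n z))" by (rule reach_rotate)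
    then have "step\<^sup>*\<^sup>* (mk n gs) (rotate s2 (mk n z))"
      using g1(1) g2(1) unfolding gs2_def by (meson rtranclp_trans)
    then have "step\<^sup>*\<^sup>* w (rotate s (rotate s2 (mk n z)))" using reach_rotate sg(2) by blast
    then have "step\<^sup>*\<^sup>* w (rotate (s + s2) (mk n z))" by (simp add: rotate_rotate)
    then show ?thesis using zback by (meson rtranclp_trans)
  qed
qed

end

theorem proposition6p1:
  fixes L n :: nat and p q :: "nat \<Rightarrow> real" and \<pi> :: "letter list \<Rightarrow> real"
  assumes "1 \<le> n" and "n < L"
    and "\<forall>k<n. 0 < p k" and "\<forall>k<n. 0 < q k"
    and "stationary_dist L n p q \<pi>"
  shows "(\<forall>i<n. \<forall>j<L. expect L n \<pi> (tau i j) = 1 / real L)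
       \<and> (\<forall>i<n. \<forall>j<L. \<forall>j'<L. j < j' \<longrightarrow> expect L n \<pi> (eta i j) = expect L n \<pi> (eta i j'))"
proof -
  interpret chn L n p q using assms(1-4) by unfold_locales auto
  have st: "stat \<pi>" using assms(5) stat_iff by simp
  show ?thesis using main_from_reach[OF st mk_omega[OF valid_z] reach_all] .
qed

end
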